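(* For the operad $\operatorname{Arb}^{!}$, one has $\operatorname{Arb}^{!}(1)\cong\operatorname{Ass}(1)$ and, for every $n\ge2$, $\operatorname{Arb}^{!}(n)\cong\operatorname{Lie}(n)\oplus\operatorname{Ass}(n)$ as $\mathfrak{S}_n$-modules, where $\operatorname{Lie}(n)$ and $\operatorname{Ass}(n)$ are the arity-$n$ components of the classical operads $\operatorname{Lie}$ and $\operatorname{Ass}$.
   Context: $\operatorname{Arb}^{!}$ is the binary quadratic (linear) operad whose algebras are vector spaces $A$ with an antisymmetric bracket $[\,,\,]$ and a (non-commutative) product $*$ satisfying, for all $a,b,c\in A$: $[a,[b,c]]+[b,[c,a]]+[c,[a,b]]=0$; $[a,b]*c=0$; $a*(b*c)=0$; $[a*b,c]=0$; $a*[b,c]=(a*b)*c-(a*c)*b$. (It is the Koszul dual of the operad of shrubs, but this definition by generators and relations suffices.) *)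

theory Defs
  imports Main "HOL-Combinatorics.Permutations" "HOL-Library.Function_Algebras"
begin

datatype 'o tree = Leaf nat | Node 'o "'o tree" "'o tree"

fun leaves :: "'o tree \<Rightarrow> nat list" where
  "leaves (Leaf i) = [i]"
| "leaves (Node g l r) = leaves l @ leaves r"

text \<open>Multilinear trees of arity n: every label 0,...,n-1 occurs exactly once as a leaf.
  These form the basis of the arity-n component of the free operad on binary generators.\<close>
definition multilin :: "nat \<Rightarrow> 'o tree \<Rightarrow> bool" where
  "multilin n t \<longleftrightarrow> mset (leaves t) = mset [0..<n]"

definition comp_basis :: "nat \<Rightarrow> 'o tree set" where
  "comp_basis n = {t. multilin n t}"

fun subst :: "(nat \<Rightarrow> 'o tree) \<Rightarrow> 'o tree \<Rightarrow> 'o tree" where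
  "subst s (Leaf i) = s i"
| "subst s (Node g l r) = Node g (subst s l) (subst s r)"

definition act :: "(nat \<Rightarrow> nat) \<Rightarrow> 'o tree \<Rightarrow> 'o tree" where
  "act \<sigma> t = subst (\<lambda>i. Leaf (\<sigma> i)) t"

definition plug :: "'o tree \<Rightarrow> nat \<Rightarrow> 'o tree \<Rightarrow> 'o tree" where
  "plug C h u = subst (\<lambda>i. if i = h then u else Leaf i) C"

definition vspace :: "'b set \<Rightarrow> ('b \<Rightarrow> 'k::field) set" where
  "vspace P = {v. finite {x. v x \<noteq> 0} \<and> {x. v x \<noteq> 0} \<subseteq> P}"

definition single :: "'b \<Rightarrow> 'k::field \<Rightarrow> 'b \<Rightarrow> 'k" where
  "single b c = (\<lambda>x. if x = b then c else 0)"

definition linext :: "('a \<Rightarrow> 'b \<Rightarrow> 'k::field) \<Rightarrow> ('a \<Rightarrow> 'k) \<Rightarrow> 'b \<Rightarrow> 'k" where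
  "linext f v = (\<lambda>y. \<Sum>t\<in>{t. v t \<noteq> 0}. v t * f t y)"

definition linact :: "((nat \<Rightarrow> nat) \<Rightarrow> 'b \<Rightarrow> 'b) \<Rightarrow> (nat \<Rightarrow> nat) \<Rightarrow> ('b \<Rightarrow> 'k::field) \<Rightarrow> 'b \<Rightarrow> 'k" where
  "linact a \<sigma> w = linext (\<lambda>t. single (a \<sigma> t) 1) w"

text \<open>A relation is a linear combination (list of coefficient/tree pairs) of trees
  which are multilinear in the labels 0..m-1 (here m = 2 or 3).\<close>
type_synonym ('k, 'o) rel = "('k \<times> 'o tree) list"

definition inst :: "'k::field \<Rightarrow> 'o tree \<Rightarrow> nat \<Rightarrow> (nat \<Rightarrow> 'o tree) \<Rightarrow> ('k, 'o) rel \<Rightarrow> 'o tree \<Rightarrow> 'k" where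
  "inst a C h s r = sum_list (map (\<lambda>(c, t). single (plug C h (subst s t)) (a * c)) r)"

text \<open>Arity-n component of the operadic ideal generated by the relations: the linear span
  of all multilinear arity-n instances C[r(s_0,...,s_{m-1})] of relations r.\<close>
inductive_set ideal :: "('k::field, 'o) rel list \<Rightarrow> nat \<Rightarrow> ('o tree \<Rightarrow> 'k) set"
  for rels :: "('k, 'o) rel list" and n :: nat where
  zero: "0 \<in> ideal rels n"
| step: "\<lbrakk> r \<in> set rels; h \<in> set (leaves C);
           \<forall>(c, t) \<in> set r. multilin n (plug C h (subst s t));
           v \<in> ideal rels n \<rbrakk> \<Longrightarrow> inst a C h s r + v \<in> ideal rels n"

text \<open>The arity-n component of the operad is vspace (comp_basis n) modulo ideal rels n,
  with the symmetric group acting via act.\<close>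

abbreviation L :: "nat \<Rightarrow> 'o tree" where "L i \<equiv> Leaf i"

datatype arbop = Br | St   (* bracket [,] and product * *)
datatype lieop = LieBr
datatype assop = AssMul

definition arb_rels :: "('k::field, arbop) rel list" where
  "arb_rels =
   [ \<comment> \<open>antisymmetry: [a,b] + [b,a] = 0\<close>
     [(1, Node Br (L 0) (L 1)), (1, Node Br (L 1) (L 0))],
     \<comment> \<open>Jacobi\<close>
     [(1, Node Br (L 0) (Node Br (L 1) (L 2))), (1, Node Br (L 1) (Node Br (L 2) (L 0))),
      (1, Node Br (L 2) (Node Br (L 0) (L 1)))],
     \<comment> \<open>[a,b]*c = 0\<close>
     [(1, Node St (Node Br (L 0) (L 1)) (L 2))],
     \<comment> \<open>a*(b*c) = 0\<close>
     [(1, Node St (L 0) (Node St (L 1) (L 2)))],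
     \<comment> \<open>[a*b,c] = 0\<close>
     [(1, Node Br (Node St (L 0) (L 1)) (L 2))],
     \<comment> \<open>a*[b,c] - (a*b)*c + (a*c)*b = 0\<close>
     [(1, Node St (L 0) (Node Br (L 1) (L 2))), (-1, Node St (Node St (L 0) (L 1)) (L 2)),
      (1, Node St (Node St (L 0) (L 2)) (L 1))] ]"

definition lie_rels :: "('k::field, lieop) rel list" where
  "lie_rels =
   [ [(1, Node LieBr (L 0) (L 1)), (1, Node LieBr (L 1) (L 0))],
     [(1, Node LieBr (L 0) (Node LieBr (L 1) (L 2))), (1, Node LieBr (L 1) (Node LieBr (L 2) (L 0))),
      (1, Node LieBr (L 2) (Node LieBr (L 0) (L 1)))] ]"

definition ass_rels :: "('k::field, assop) rel list" where
  "ass_rels =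
   [ [(1, Node AssMul (Node AssMul (L 0) (L 1)) (L 2)), (-1, Node AssMul (L 0) (Node AssMul (L 1) (L 2)))] ]"

definition sum_basis :: "nat \<Rightarrow> (lieop tree + assop tree) set" where
  "sum_basis n = Inl ` comp_basis n \<union> Inr ` comp_basis n"

definition sum_rel :: "nat \<Rightarrow> (lieop tree + assop tree \<Rightarrow> 'k::field) set" where
  "sum_rel n = {(\<lambda>x. case x of Inl a \<Rightarrow> u a | Inr b \<Rightarrow> w b) | u w.
                  u \<in> ideal lie_rels n \<and> w \<in> ideal ass_rels n}"

definition sum_act :: "(nat \<Rightarrow> nat) \<Rightarrow> lieop tree + assop tree \<Rightarrow> lieop tree + assop tree" where
  "sum_act \<sigma> = map_sum (act \<sigma>) (act \<sigma>)"

text \<open>vspace P / R and vspace Q / S are isomorphic as S_n-modules: there is a linear map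
  F : vspace P \<rightarrow> vspace Q (given by its values f on the basis P) that induces a
  well-defined, bijective, S_n-equivariant map of the quotients.\<close>
definition quot_iso ::
  "'a set \<Rightarrow> ('a \<Rightarrow> 'k::field) set \<Rightarrow> ((nat \<Rightarrow> nat) \<Rightarrow> 'a \<Rightarrow> 'a) \<Rightarrow>
   'b set \<Rightarrow> ('b \<Rightarrow> 'k) set \<Rightarrow> ((nat \<Rightarrow> nat) \<Rightarrow> 'b \<Rightarrow> 'b) \<Rightarrow> nat \<Rightarrow> bool" where
  "quot_iso P R aP Q S aQ n \<longleftrightarrow>
    (\<exists>f :: 'a \<Rightarrow> 'b \<Rightarrow> 'k.
       (\<forall>t\<in>P. f t \<in> vspace Q) \<and>
       (\<forall>v\<in>R. linext f v \<in> S) \<and>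
       (\<forall>v\<in>vspace P. linext f v \<in> S \<longrightarrow> v \<in> R) \<and>
       (\<forall>w\<in>vspace Q. \<exists>v\<in>vspace P. linext f v - w \<in> S) \<and>
       (\<forall>\<sigma>. \<sigma> permutes {0..<n} \<longrightarrow>
          (\<forall>t\<in>P. f (aP \<sigma> t) - linact aQ \<sigma> (f t) \<in> S)))"

end

theory Submission
  imports Defs
begin


abbreviation supp :: "('a \<Rightarrow> 'k::zero) \<Rightarrow> 'a set" where "supp v \<equiv> {x. v x \<noteq> 0}"

lemma leaves_subst: "leaves (subst s t) = concat (map (\<lambda>i. leaves (s i)) (leaves t))"
  by (induction t) auto

lemma plug_Node[simp]: "plug (Node g l r) h u = Node g (plug l h u) (plug r h u)" by (simp add: plug_def)
lemma plug_Leaf[simp]: "plug (Leaf i) h u = (if i = h then u else Leaf i)" by (simp add: plug_def)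

lemma leaves_plug: "leaves (plug C h u) = concat (map (\<lambda>i. if i = h then leaves u else [i]) (leaves C))"
  by (induction C) auto

lemma plug_notin: "h \<notin> set (leaves C) \<Longrightarrow> plug C h u = C"
  by (induction C) auto

lemma mset_leaves_plug: "mset (leaves u) = mset (leaves u') \<Longrightarrow> mset (leaves (plug C h u)) = mset (leaves (plug C h u'))"
  by (induction C) auto

lemma single_apply: "single b c x = (if x = b then c else 0)" by (simp add: single_def)

lemma linext_eq: "finite A \<Longrightarrow> supp v \<subseteq> A \<Longrightarrow> linext f v = (\<lambda>y. \<Sum>t\<in>A. v t * f t y)"
  unfolding linext_def by (auto intro!: sum.mono_neutral_left ext)

lemma linext_add:
  assumes "finite (supp u)" "finite (supp v)"
  shows "linext f (u + v) = linext f u + linext f v"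
proof -
  let ?A = "supp u \<union> supp v"
  have f: "finite ?A" using assms by auto
  have "supp (u+v) \<subseteq> ?A" by auto
  then have 1: "linext f (u+v) = (\<lambda>y. \<Sum>t\<in>?A. (u+v) t * f t y)" using linext_eq[OF f] by blast
  have 2: "linext f u = (\<lambda>y. \<Sum>t\<in>?A. u t * f t y)" using linext_eq[OF f] by blast
  have 3: "linext f v = (\<lambda>y. \<Sum>t\<in>?A. v t * f t y)" using linext_eq[OF f] by blast
  show ?thesis unfolding 1 2 3 by (auto simp: fun_eq_iff algebra_simps sum.distrib)
qed

lemma linext_single: "linext f (single b c) = (\<lambda>y. c * f b y)"
proof (cases "c = 0")
  case True then show ?thesis by (simp add: linext_def single_def)
next
  case False
  have "supp (single b c) = {b}" using False by (auto simp: single_def)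
  then show ?thesis by (simp add: linext_def single_def)
qed

lemma linext_zero[simp]: "linext f 0 = 0"
  unfolding linext_def zero_fun_def by simp

lemma linext_scale: "linext f (\<lambda>x. c * v x) = (\<lambda>y. c * linext f v y)"
proof (cases "c = 0")
  case True then show ?thesis by (simp add: linext_def)
next
  case False
  then have "supp (\<lambda>x. c * v x) = supp v" by auto
  then show ?thesis using False by (simp add: linext_def sum_distrib_left mult.assoc)
qed

lemma sum_list_fun_apply: "sum_list (map f xs) y = sum_list (map (\<lambda>x. f x y) xs)"
  by (induction xs) auto

lemma inst_Nil[simp]: "inst a C h s [] = 0" by (simp add: inst_def)
lemma inst_Cons[simp]: "inst a C h s ((c,t)#r) = single (plug C h (subst s t)) (a*c) + inst a C h s r"
  by (simp add: inst_def)

lemma supp_inst: "supp (inst a C h s r) \<subseteq> (\<lambda>(c,t). plug C h (subst s t)) ` set r"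
  by (induction r) (auto simp: single_def)

lemma finite_supp_inst: "finite (supp (inst a C h s r))"
  by (rule finite_subset[OF supp_inst]) auto

lemma finite_supp_single: "finite (supp (single b c))"
  by (rule finite_subset[of _ "{b}"]) (auto simp: single_def)

lemma linext_inst: "linext f (inst a C h s r) = (\<lambda>y. \<Sum>(c,t)\<leftarrow>r. a*c * f (plug C h (subst s t)) y)"
proof (induction r)
  case Nil then show ?case unfolding linext_def by (simp add: fun_eq_iff)
next
  case (Cons x r)
  obtain c t where x: "x = (c,t)" by fastforce
  show ?case unfolding x inst_Cons linext_add[OF finite_supp_single finite_supp_inst] linext_single Cons
    by (simp add: fun_eq_iff)
qed

lemma inst_scale: "inst (c*a) C h s r = (\<lambda>y. c * inst a C h s r y)"
  by (induction r) (auto simp: fun_eq_iff single_def distrib_left mult.assoc)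

section \<open>ideal closure\<close>

lemma ideal_fin: "v \<in> ideal rels n \<Longrightarrow> finite (supp v) \<and> supp v \<subseteq> comp_basis n"
proof (induction rule: ideal.induct)
  case zero then show ?case by simp
next
  case (step r h C s v a)
  have "supp (inst a C h s r) \<subseteq> comp_basis n"
    using supp_inst[of a C h s r] step.hyps(3) by (auto simp: comp_basis_def)
  moreover have "supp (inst a C h s r + v) \<subseteq> supp (inst a C h s r) \<union> supp v" by auto
  ultimately show ?case using step.IH finite_supp_inst[of a C h s r]
    by (meson finite_Un finite_subset le_sup_iff subset_trans)
qed

lemma ideal_add: "u \<in> ideal rels n \<Longrightarrow> v \<in> ideal rels n \<Longrightarrow> u + v \<in> ideal rels n"
proof (induction rule: ideal.induct)
  case zero then show ?case by simp
next
  case (step r h C s v' a)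
  then show ?case using ideal.step[of r rels h C n s "v'+v" a] by (metis add.assoc)
qed

lemma ideal_scale: "v \<in> ideal rels n \<Longrightarrow> (\<lambda>y. c * v y) \<in> ideal rels n"
proof (induction rule: ideal.induct)
  case zero then show ?case by (simp add: zero_fun_def ideal.zero[unfolded zero_fun_def])
next
  case (step r h C s v a)
  have "(\<lambda>y. c * (inst a C h s r + v) y) = inst (c*a) C h s r + (\<lambda>y. c * v y)"
    by (simp only: inst_scale[of c a]) (simp add: fun_eq_iff distrib_left)
  then show ?case using ideal.step[OF step.hyps(1-3) step.IH] by simp
qed

lemma ideal_uminus: "v \<in> ideal rels n \<Longrightarrow> - v \<in> ideal rels n"
  proof -
  assume "v \<in> ideal rels n"
  moreover have "- v = (\<lambda>y. (-1) * v y)" by (simp add: fun_eq_iff)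
  ultimately show ?thesis using ideal_scale[of v rels n "-1"] by simp
qed

lemma ideal_diff: "u \<in> ideal rels n \<Longrightarrow> v \<in> ideal rels n \<Longrightarrow> u - v \<in> ideal rels n"
  by (metis diff_conv_add_uminus ideal_add ideal_uminus)

lemma ideal_sum: "finite A \<Longrightarrow> (\<And>x. x \<in> A \<Longrightarrow> g x \<in> ideal rels n) \<Longrightarrow> (\<Sum>x\<in>A. g x) \<in> ideal rels n"
  by (induction A rule: finite_induct) (auto intro: ideal.zero ideal_add)

lemma ideal_single_inst:
  "r \<in> set rels \<Longrightarrow> h \<in> set (leaves C) \<Longrightarrow> \<forall>(c, t) \<in> set r. multilin n (plug C h (subst s t))
   \<Longrightarrow> inst a C h s r \<in> ideal rels n"
  using ideal.step[OF _ _ _ ideal.zero] by fastforce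



fun conv :: "(nat list \<Rightarrow> 'k::field) \<Rightarrow> (nat list \<Rightarrow> 'k) \<Rightarrow> nat list \<Rightarrow> 'k" where
  "conv p q [] = p [] * q []"
| "conv p q (x#w) = p [] * q (x#w) + conv (\<lambda>u. p (x#u)) q w"

lemma conv_add_left: "conv (\<lambda>u. p u + p' u) q w = conv p q w + conv p' q w"
  by (induction w arbitrary: p p') (auto simp: algebra_simps)
lemma conv_scale_left: "conv (\<lambda>u. c * p u) q w = c * conv p q w"
  by (induction w arbitrary: p) (auto simp: algebra_simps)
lemma conv_zero_left: "conv (\<lambda>u. 0) q w = 0"
  by (induction w) auto
lemma conv_add_right: "conv p (\<lambda>u. q u + q' u) w = conv p q w + conv p q' w"
  by (induction w arbitrary: p) (auto simp: algebra_simps)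
lemma conv_scale_right: "conv p (\<lambda>u. c * q u) w = c * conv p q w"
  by (induction w arbitrary: p) (auto simp: algebra_simps)
lemma conv_zero_right: "conv p (\<lambda>u. 0) w = 0"
  by (induction w arbitrary: p) auto

lemma conv_minus_left: "conv (\<lambda>u. p u - p' u) q w = conv p q w - conv p' q w"
proof -
  have "(\<lambda>u. p u - p' u) = (\<lambda>u. p u + (-1) * p' u)" by auto
  moreover have "conv (\<lambda>u. p u + (-1) * p' u) q w = conv p q w + (-1) * conv p' q w"
    by (simp only: conv_add_left conv_scale_left)
  ultimately show ?thesis by simp
qed
lemma conv_minus_right: "conv p (\<lambda>u. q u - q' u) w = conv p q w - conv p q' w"
proof -
  have "(\<lambda>u. q u - q' u) = (\<lambda>u. q u + (-1) * q' u)" by auto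
  moreover have "conv p (\<lambda>u. q u + (-1) * q' u) w = conv p q w + (-1) * conv p q' w"
    by (simp only: conv_add_right conv_scale_right)
  ultimately show ?thesis by simp
qed

lemma conv_diff_l[simp]: "conv (p - p') q = conv p q - conv p' q"
  using conv_minus_left[of p p' q] by (auto simp: fun_eq_iff fun_diff_def)
lemma conv_diff_r[simp]: "conv p (q - q') = conv p q - conv p q'"
  using conv_minus_right[of p q q'] by (auto simp: fun_eq_iff fun_diff_def)
lemma conv_0_l[simp]: "conv 0 q = 0"
  using conv_zero_left by (auto simp: fun_eq_iff zero_fun_def)
lemma conv_0_r[simp]: "conv p 0 = 0"
  using conv_zero_right by (auto simp: fun_eq_iff zero_fun_def)

lemma conv_assoc: "conv (conv p q) r w = conv p (conv q r) w"
proof (induction w arbitrary: p q)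
  case Nil then show ?case by (simp add: algebra_simps)
next
  case (Cons x w)
  have e: "(\<lambda>u. conv p q (x#u)) = (\<lambda>u. p [] * q (x#u) + conv (\<lambda>v. p (x#v)) q u)" by simp
  show ?case
    by (simp only: conv.simps e conv_add_left conv_scale_left Cons) (simp add: algebra_simps)
qed

lemma conv_assoc'[simp]: "conv (conv p q) r = conv p (conv q r)"
  using conv_assoc by blast

lemma conv_single_l: "conv (single u a) q w = (if take (length u) w = u then a * q (drop (length u) w) else 0)"
proof (induction w arbitrary: u)
  case Nil then show ?case by (auto simp: single_def)
next
  case (Cons x w)
  note IH = Cons.IH
  show ?case
  proof (cases u)
    case Nil
    have "(\<lambda>v. single [] a (x#v)) = (\<lambda>v. 0)" by (auto simp: single_def)
    then show ?thesis using Nil by (simp add: single_def conv_zero_left)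
  next
    case (Cons y u')
    have "(\<lambda>v. single (y#u') a (x#v)) = (if x = y then single u' a else (\<lambda>v. 0))"
      by (auto simp: single_def fun_eq_iff)
    then show ?thesis using Cons IH by (auto simp: single_def conv_zero_left)
  qed
qed

lemma conv_single_single: "conv (single u a) (single v b) = single (u @ v) (a * b)"
proof (rule ext)
  fix w
  show "conv (single u a) (single v b) w = single (u @ v) (a * b) w"
    unfolding conv_single_l
    by (auto simp: single_def) (metis append_take_drop_id)
qed

lemma conv_map: "conv p q (map \<sigma> w) = conv (\<lambda>u. p (map \<sigma> u)) (\<lambda>u. q (map \<sigma> u)) w"
  by (induction w arbitrary: p) auto

lemma conv_supp: "conv p q w \<noteq> 0 \<Longrightarrow> \<exists>u v. w = u @ v \<and> p u \<noteq> 0 \<and> q v \<noteq> 0"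
proof (induction w arbitrary: p)
  case Nil then show ?case by auto
next
  case (Cons x w)
  show ?case
  proof (cases "p [] * q (x#w) = 0")
    case True
    then have "conv (\<lambda>u. p (x#u)) q w \<noteq> 0" using Cons.prems by auto
    from Cons.IH[OF this] obtain u v where "w = u @ v" "p (x#u) \<noteq> 0" "q v \<noteq> 0" by blast
    then show ?thesis by (intro exI[of _ "x#u"] exI[of _ v]) auto
  next
    case False then show ?thesis by (intro exI[of _ "[]"] exI[of _ "x#w"]) auto
  qed
qed

fun isLeaf :: "'o tree \<Rightarrow> bool" where
  "isLeaf (Leaf i) = True" | "isLeaf (Node g l r) = False"

fun iv :: "arbop tree \<Rightarrow> nat list \<Rightarrow> 'k::field" where
  "iv (Leaf i) = single [i] 1"
| "iv (Node Br a b) = conv (iv a) (iv b) - conv (iv b) (iv a)"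
| "iv (Node St a b) = 0"

fun wd :: "arbop tree \<Rightarrow> nat list \<Rightarrow> 'k::field" where
  "wd (Leaf i) = 0"
| "wd (Node Br a b) = 0"
| "wd (Node St a b) = conv (if isLeaf a then iv a else wd a) (iv b)"

definition lw :: "arbop tree \<Rightarrow> nat list \<Rightarrow> 'k::field" where
  "lw t = (if isLeaf t then iv t else wd t)"

lemma wd_St: "wd (Node St a b) = conv (lw a) (iv b)" by (simp add: lw_def)

lemma leaves_ne: "leaves t \<noteq> []"
  by (induction t) auto

lemma iv_supp: "(iv t w :: 'k::field) \<noteq> 0 \<Longrightarrow> mset w = mset (leaves t)"
proof (induction t arbitrary: w rule: iv.induct)
  case (1 i) then show ?case by (auto simp: single_def split: if_splits)
next
  case (2 a b)
  then have "(conv (iv a) (iv b) w :: 'k) \<noteq> 0 \<or> (conv (iv b) (iv a) w :: 'k) \<noteq> 0" by auto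
  then show ?case using 2 by (auto dest!: conv_supp)
next
  case (3 a b) then show ?case by simp
qed

lemma lw_wd_supp: "((lw t w :: 'k::field) \<noteq> 0 \<longrightarrow> mset w = mset (leaves t)) \<and> ((wd t w :: 'k) \<noteq> 0 \<longrightarrow> mset w = mset (leaves t) \<and> length w \<ge> 2)"
proof (induction t arbitrary: w)
  case (Leaf i) then show ?case by (auto simp: lw_def single_def)
next
  case (Node g a b)
  have wdc: "(wd (Node g a b) w :: 'k) \<noteq> 0 \<longrightarrow> mset w = mset (leaves (Node g a b)) \<and> length w \<ge> 2"
  proof
    assume a: "(wd (Node g a b) w :: 'k) \<noteq> 0"
    then have g: "g = St" by (cases g) auto
    have c: "(conv (lw a) (iv b) w :: 'k) \<noteq> 0" using a by (simp add: g wd_St del: wd.simps)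
    from conv_supp[OF c] obtain u v where "w = u @ v" "(lw a u :: 'k) \<noteq> 0" "(iv b v :: 'k) \<noteq> 0" by blast
    with Node.IH(1)[of u] iv_supp[of b v] have "w = u @ v" "mset u = mset (leaves a)" "mset v = mset (leaves b)" by auto
    moreover have "u \<noteq> []" "v \<noteq> []" using calculation leaves_ne[of a] leaves_ne[of b] by auto
    ultimately show "mset w = mset (leaves (Node g a b)) \<and> length w \<ge> 2"
      by (cases u; cases v) auto
  qed
  then show ?case by (auto simp: lw_def)
qed

lemma wd_supp: "(wd t w :: 'k::field) \<noteq> 0 \<Longrightarrow> mset w = mset (leaves t) \<and> length w \<ge> 2"
  using lw_wd_supp by blast

fun pureBr :: "arbop tree \<Rightarrow> bool" where
  "pureBr (Leaf i) = True" | "pureBr (Node g l r) = (g = Br \<and> pureBr l \<and> pureBr r)"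

lemma wd_pure: "pureBr t \<Longrightarrow> wd t = 0"
  by (cases t rule: wd.cases) auto

lemma iv_nonpure: "\<not> pureBr t \<Longrightarrow> iv t = 0"
  by (induction t rule: iv.induct) auto

definition ren :: "arbop tree \<Rightarrow> lieop tree" where "ren = map_tree (\<lambda>_. LieBr)"
definition unrn :: "lieop tree \<Rightarrow> arbop tree" where "unrn = map_tree (\<lambda>_. Br)"

lemma leaves_map_tree[simp]: "leaves (map_tree f t) = leaves t"
  by (induction t) auto

lemma lieop_id: "map_tree (\<lambda>_. LieBr) t = (t :: lieop tree)"
proof (induction t)
  case (Node g l r) then show ?case by (cases g) auto
qed auto

lemma ren_unrn[simp]: "ren (unrn x) = x"
  unfolding ren_def unrn_def by (simp add: tree.map_comp o_def lieop_id)

lemma pure_unrn[simp]: "pureBr (unrn x)"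
  unfolding unrn_def by (induction x) auto

lemma unrn_ren: "pureBr t \<Longrightarrow> unrn (ren t) = t"
  unfolding ren_def unrn_def by (induction t) auto

lemma map_tree_subst: "map_tree f (subst s t) = subst (\<lambda>i. map_tree f (s i)) (map_tree f t)"
  by (induction t) auto

lemma map_tree_plug: "map_tree f (plug C h u) = plug (map_tree f C) h (map_tree f u)"
  by (induction C) auto

lemma pureBr_plug0: "pureBr (plug C h u) = (pureBr C \<and> (h \<in> set (leaves C) \<longrightarrow> pureBr u))"
  by (induction C) auto

lemma pureBr_plug: "h \<in> set (leaves C) \<Longrightarrow> pureBr (plug C h u) = (pureBr C \<and> pureBr u)"
  by (simp add: pureBr_plug0)

lemma pureBr_subst: "pureBr (subst s t) = (pureBr t \<and> (\<forall>i\<in>set (leaves t). pureBr (s i)))"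
  by (induction t) auto

fun isLC :: "'o \<Rightarrow> 'o tree \<Rightarrow> bool" where
  "isLC g (Leaf i) = True" | "isLC g (Node g' l r) = (g' = g \<and> isLC g l \<and> isLeaf r)"

definition combo :: "'o \<Rightarrow> nat list \<Rightarrow> 'o tree" where
  "combo g w = foldl (\<lambda>T j. Node g T (Leaf j)) (Leaf (hd w)) (tl w)"

lemma combo_snoc: "w \<noteq> [] \<Longrightarrow> combo g (w @ [j]) = Node g (combo g w) (Leaf j)"
  unfolding combo_def by (cases w) auto

lemma combo_single: "combo g [i] = Leaf i" by (simp add: combo_def)

lemma combo_props: "w \<noteq> [] \<Longrightarrow> leaves (combo g w) = w \<and> isLC g (combo g w)"
proof (induction w rule: rev_induct)
  case (snoc j w)
  then show ?case by (cases "w = []") (auto simp: combo_snoc combo_single)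
qed simp

lemma isLC_combo: "isLC g t \<Longrightarrow> combo g (leaves t) = t"
proof (induction t)
  case (Leaf i) then show ?case by (simp add: combo_single)
next
  case (Node g' l r)
  then obtain j where "r = Leaf j" by (cases r) auto
  then show ?case using Node by (simp add: combo_snoc leaves_ne)
qed

lemma isLC_eq: "isLC g t \<Longrightarrow> isLC g t' \<Longrightarrow> leaves t = leaves t' \<Longrightarrow> t = t'"
  by (metis isLC_combo)

definition lievec :: "arbop tree \<Rightarrow> lieop tree \<Rightarrow> 'k::field" where
  "lievec t = (if pureBr t then single (ren t) 1 else 0)"

definition assvec :: "arbop tree \<Rightarrow> assop tree \<Rightarrow> 'k::field" where
  "assvec t b = (if isLC AssMul b then wd t (leaves b) else 0)"

definition fvec :: "arbop tree \<Rightarrow> lieop tree + assop tree \<Rightarrow> 'k::field" where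
  "fvec t = (\<lambda>x. case x of Inl a \<Rightarrow> lievec t a | Inr b \<Rightarrow> assvec t b)"



lemma conv_sum_left: "conv (\<lambda>v. \<Sum>x\<leftarrow>xs. c x * F x v) q w = (\<Sum>x\<leftarrow>xs. c x * conv (F x) q w)"
  by (induction xs) (auto simp: conv_zero_left conv_add_left conv_scale_left)

lemma conv_sum_right: "conv p (\<lambda>v. \<Sum>x\<leftarrow>xs. c x * F x v) w = (\<Sum>x\<leftarrow>xs. c x * conv p (F x) w)"
  by (induction xs) (auto simp: conv_zero_right conv_add_right conv_scale_right)

lemma nonleaf_plug: "h \<in> set (leaves C) \<Longrightarrow> \<not> isLeaf u \<Longrightarrow> \<not> isLeaf (plug C h u)"
  by (cases C) auto

lemma set_leaves_plug: "h \<in> set (leaves C) \<Longrightarrow> set (leaves u) \<subseteq> set (leaves (plug C h u))"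
  by (induction C) auto

lemma sum_zero_fun: "(\<forall>w. (\<Sum>x\<leftarrow>xs. c x * F x w) = 0) \<Longrightarrow> (\<lambda>v. \<Sum>x\<leftarrow>xs. c x * F x v) = (\<lambda>v. 0)"
  by auto

lemma vanish:
  fixes c :: "'a \<Rightarrow> 'k::field" and u :: "'a \<Rightarrow> arbop tree"
  assumes nl: "\<forall>x\<in>set xs. \<not> isLeaf (u x)"
    and hi: "\<forall>w. (\<Sum>x\<leftarrow>xs. c x * iv (u x) w) = 0"
    and hw: "\<forall>w. (\<Sum>x\<leftarrow>xs. c x * wd (u x) w) = 0"
  shows "h \<in> set (leaves C) \<Longrightarrow> distinct (leaves (plug C h u0)) \<Longrightarrow> leaves u0 \<noteq> [] \<Longrightarrow>
     (\<forall>w. (\<Sum>x\<leftarrow>xs. c x * iv (plug C h (u x)) w) = 0) \<and> (\<forall>w. (\<Sum>x\<leftarrow>xs. c x * wd (plug C h (u x)) w) = 0)"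
proof (induction C)
  case (Leaf j)
  then show ?case using hi hw by simp
next
  case (Node g l r)
  have dd: "distinct (leaves (plug l h u0) @ leaves (plug r h u0))" using Node.prems by simp
  show ?case
  proof (cases "h \<in> set (leaves l)")
    case True
    have nr: "h \<notin> set (leaves r)"
    proof
      assume "h \<in> set (leaves r)"
      then have "set (leaves u0) \<subseteq> set (leaves (plug r h u0))" "set (leaves u0) \<subseteq> set (leaves (plug l h u0))"
        using True set_leaves_plug by blast+
      then show False using dd Node.prems(3) by (cases "leaves u0") auto
    qed
    have IH: "(\<lambda>v. \<Sum>x\<leftarrow>xs. c x * iv (plug l h (u x)) v) = (\<lambda>v. 0)"
             "(\<lambda>v. \<Sum>x\<leftarrow>xs. c x * wd (plug l h (u x)) v) = (\<lambda>v. 0)"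
      using Node.IH(1)[OF True] dd Node.prems(3) by auto
    have lw: "\<And>x. x \<in> set xs \<Longrightarrow> lw (plug l h (u x)) = wd (plug l h (u x))"
      using nonleaf_plug[OF True] nl by (simp add: lw_def)
    have lws: "(\<lambda>v. \<Sum>x\<leftarrow>xs. c x * lw (plug l h (u x)) v) = (\<lambda>v. \<Sum>x\<leftarrow>xs. c x * wd (plug l h (u x)) v)"
      apply (rule ext)
      by (rule arg_cong[where f=sum_list], rule map_cong[OF refl]) (simp add: lw)
    show ?thesis
    proof (cases g)
      case Br
      show ?thesis using IH
        by (simp add: Br plug_notin[OF nr] fun_diff_def right_diff_distrib sum_list_subtractf
             conv_sum_left[symmetric] conv_sum_right[symmetric] conv_zero_left conv_zero_right)
    next
      case St
      show ?thesis using IH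
        by (simp del: wd.simps add: wd_St St plug_notin[OF nr] lws conv_sum_left[symmetric] conv_zero_left)
    qed
  next
    case False
    then have True': "h \<in> set (leaves r)" using Node.prems(1) by simp
    have IH: "(\<lambda>v. \<Sum>x\<leftarrow>xs. c x * iv (plug r h (u x)) v) = (\<lambda>v. 0)"
             "(\<lambda>v. \<Sum>x\<leftarrow>xs. c x * wd (plug r h (u x)) v) = (\<lambda>v. 0)"
      using Node.IH(2)[OF True'] dd Node.prems(3) by auto
    show ?thesis
    proof (cases g)
      case Br
      show ?thesis using IH
        by (simp add: Br plug_notin[OF False] fun_diff_def right_diff_distrib sum_list_subtractf
             conv_sum_left[symmetric] conv_sum_right[symmetric] conv_zero_left conv_zero_right)
    next
      case St
      show ?thesis using IH
        by (simp del: wd.simps add: wd_St St plug_notin[OF False] conv_sum_right[symmetric] conv_zero_right)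
    qed
  qed
qed



lemma multilin_distinct: "multilin n t \<Longrightarrow> distinct (leaves t)"
  unfolding multilin_def by (metis card_distinct distinct_card distinct_upt set_mset_mset size_mset)

lemma rel_base: "r \<in> set arb_rels \<Longrightarrow> r \<noteq> [] \<and> (\<forall>x\<in>set r. \<not> isLeaf (subst s (snd x)))
   \<and> (\<forall>w. (\<Sum>x\<leftarrow>r. fst x * iv (subst s (snd x)) w) = (0::'k::field))
   \<and> (\<forall>w. (\<Sum>x\<leftarrow>r. fst x * wd (subst s (snd x)) w) = (0::'k))"
  unfolding arb_rels_def
  apply (simp only: set_simps insert_iff empty_iff)
  apply (elim disjE)
  apply (simp_all del: wd.simps(3) add: wd_St fun_diff_def lw_def conv_minus_left conv_minus_right conv_assoc algebra_simps)
  done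

lemma wd_ideal: "v \<in> ideal arb_rels n \<Longrightarrow> linext wd v = (0 :: nat list \<Rightarrow> 'k::field)"
proof (induction rule: ideal.induct)
  case zero then show ?case by (rule linext_zero)
next
  case (step r h C s v a)
  from rel_base[OF step.hyps(1), of s] have rb: "r \<noteq> []" "\<forall>x\<in>set r. \<not> isLeaf (subst s (snd x))"
    "\<forall>w. (\<Sum>x\<leftarrow>r. fst x * iv (subst s (snd x)) w) = (0::'k)"
    "\<forall>w. (\<Sum>x\<leftarrow>r. fst x * wd (subst s (snd x)) w) = (0::'k)" by auto
  obtain x0 where x0: "x0 \<in> set r" using rb(1) by (cases r) auto
  have ml: "multilin n (plug C h (subst s (snd x0)))" using step.hyps(3) x0 by auto
  have hi: "\<forall>w. (\<Sum>x\<leftarrow>r. (a * fst x) * iv (subst s (snd x)) w) = (0::'k)"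
    using rb(3) by (simp add: mult.assoc sum_list_const_mult)
  have hw: "\<forall>w. (\<Sum>x\<leftarrow>r. (a * fst x) * wd (subst s (snd x)) w) = (0::'k)"
    using rb(4) by (simp add: mult.assoc sum_list_const_mult)
  have V: "\<forall>w. (\<Sum>x\<leftarrow>r. (a * fst x) * wd (plug C h (subst s (snd x))) w) = (0::'k)"
    using vanish[of r "\<lambda>x. subst s (snd x)" "\<lambda>x. a * fst x", OF rb(2) hi hw step.hyps(2)
        multilin_distinct[OF ml] leaves_ne] by blast
  have "linext wd (inst a C h s r) = (0 :: nat list \<Rightarrow> 'k)"
    unfolding linext_inst using V by (simp add: fun_eq_iff split_def)
  moreover have "linext wd (inst a C h s r + v) = linext wd (inst a C h s r) + linext wd v"
    using linext_add finite_supp_inst ideal_fin[OF step.hyps(4)] by blast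
  ultimately show ?case using step.IH by (metis add.right_neutral)
qed



lemma sum_list_map_eq_0: "(\<And>x. x \<in> set xs \<Longrightarrow> f x = 0) \<Longrightarrow> sum_list (map f xs) = 0"
  by (induction xs) auto

definition lift :: "('k \<times> lieop tree) list \<Rightarrow> ('k \<times> arbop tree) list" where
  "lift rl = map (\<lambda>(c,t). (c, unrn t)) rl"

lemma arb_rels_cases: "r \<in> set (arb_rels :: ('k::field, arbop) rel list) \<Longrightarrow>
   (\<exists>rl \<in> set lie_rels. r = lift rl) \<or> (\<forall>x\<in>set r. \<not> pureBr (snd x))"
  unfolding arb_rels_def lie_rels_def lift_def unrn_def by auto

lemma lie_rels_K: "rl \<in> set (lie_rels :: ('k::field, lieop) rel list) \<Longrightarrow> \<exists>K. \<forall>x\<in>set rl. set (leaves (snd x)) = K"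
  unfolding lie_rels_def by auto

lemma ren_ps: "ren (plug C h (subst s (unrn t))) = plug (ren C) h (subst (\<lambda>i. ren (s i)) t)"
  unfolding ren_def by (simp add: map_tree_plug map_tree_subst ren_unrn[unfolded ren_def])

lemma leaves_unrn[simp]: "leaves (unrn t) = leaves t" by (simp add: unrn_def)
lemma leaves_ren[simp]: "leaves (ren t) = leaves t" by (simp add: ren_def)

lemma lie_sum: "\<forall>x\<in>set rl. set (leaves (snd x)) = K \<Longrightarrow> h \<in> set (leaves C) \<Longrightarrow>
  (\<Sum>x\<leftarrow>lift rl. a * fst x * (lievec (plug C h (subst s (snd x))) y :: 'k::field)) =
  (if pureBr C \<and> (\<forall>i\<in>K. pureBr (s i)) then inst a (ren C) h (\<lambda>i. ren (s i)) rl y else 0)"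
proof (induction rl)
  case Nil then show ?case by (simp add: lift_def)
next
  case (Cons x rl)
  obtain c t where x: "x = (c,t)" by fastforce
  have K: "set (leaves t) = K" using Cons.prems x by auto
  have "(\<Sum>x\<leftarrow>lift (x#rl). a * fst x * (lievec (plug C h (subst s (snd x))) y :: 'k))
     = a * c * lievec (plug C h (subst s (unrn t))) y + (\<Sum>x\<leftarrow>lift rl. a * fst x * lievec (plug C h (subst s (snd x))) y)"
    by (simp add: lift_def x)
  also have "\<dots> = (if pureBr C \<and> (\<forall>i\<in>K. pureBr (s i)) then single (plug (ren C) h (subst (\<lambda>i. ren (s i)) t)) (a*c) y else 0)
      + (if pureBr C \<and> (\<forall>i\<in>K. pureBr (s i)) then inst a (ren C) h (\<lambda>i. ren (s i)) rl y else 0)"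
    using Cons by (auto simp: lievec_def pureBr_plug[OF Cons.prems(2)] pureBr_subst K ren_ps single_def)
  finally show ?case by (simp add: x)
qed

lemma lie_inst:
  assumes "r \<in> set arb_rels" "h \<in> set (leaves C)" "\<forall>(c, t) \<in> set r. multilin n (plug C h (subst s t))"
  shows "linext lievec (inst a C h s r) \<in> (ideal lie_rels n :: (lieop tree \<Rightarrow> 'k::field) set)"
proof -
  have L: "linext lievec (inst a C h s r) = (\<lambda>y. \<Sum>x\<leftarrow>r. a * fst x * (lievec (plug C h (subst s (snd x))) y :: 'k))"
    by (simp add: linext_inst split_def)
  from arb_rels_cases[OF assms(1)] show ?thesis
  proof
    assume "\<exists>rl \<in> set lie_rels. r = lift rl"
    then obtain rl where rl: "rl \<in> set lie_rels" "r = lift rl" by blast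
    obtain K where K: "\<forall>x\<in>set rl. set (leaves (snd x)) = K" using lie_rels_K[OF rl(1)] by blast
    show ?thesis
    proof (cases "pureBr C \<and> (\<forall>i\<in>K. pureBr (s i))")
      case True
      have "linext lievec (inst a C h s r) = inst a (ren C) h (\<lambda>i. ren (s i)) rl"
        unfolding L by (simp add: rl(2) lie_sum[OF K assms(2)] True fun_eq_iff)
      moreover have "inst a (ren C) h (\<lambda>i. ren (s i)) rl \<in> (ideal lie_rels n :: (lieop tree \<Rightarrow> 'k) set)"
      proof (rule ideal_single_inst[OF rl(1)])
        show "h \<in> set (leaves (ren C))" using assms(2) by simp
        show "\<forall>(c, t)\<in>set rl. multilin n (plug (ren C) h (subst (\<lambda>i. ren (s i)) t))"
        proof (clarify)
          fix c t assume "(c,t) \<in> set rl"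
          then have "(c, unrn t) \<in> set r" using rl(2) by (force simp: lift_def)
          then have "multilin n (plug C h (subst s (unrn t)))" using assms(3) by auto
          then show "multilin n (plug (ren C) h (subst (\<lambda>i. ren (s i)) t))"
            using ren_ps[of C h s t] leaves_ren by (metis multilin_def)
        qed
      qed
      ultimately show ?thesis by simp
    next
      case False
      have "linext lievec (inst a C h s r) = 0"
        unfolding L by (simp add: rl(2) lie_sum[OF K assms(2)] False fun_eq_iff)
      then show ?thesis by (simp add: ideal.zero)
    qed
  next
    assume np: "\<forall>x\<in>set r. \<not> pureBr (snd x)"
    have "\<And>x y. x \<in> set r \<Longrightarrow> a * fst x * (lievec (plug C h (subst s (snd x))) y :: 'k) = 0"
      using np by (simp add: lievec_def pureBr_plug[OF assms(2)] pureBr_subst)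
    then have "linext lievec (inst a C h s r) = (0 :: lieop tree \<Rightarrow> 'k)"
      unfolding L by (simp add: fun_eq_iff sum_list_map_eq_0)
    then show ?thesis by (simp add: ideal.zero)
  qed
qed

lemma lie_ideal: "v \<in> ideal arb_rels n \<Longrightarrow> linext lievec v \<in> (ideal lie_rels n :: (lieop tree \<Rightarrow> 'k::field) set)"
proof (induction rule: ideal.induct)
  case zero then show ?case by (simp only: linext_zero) (rule ideal.zero)
next
  case (step r h C s v a)
  have "linext lievec (inst a C h s r + v) = linext lievec (inst a C h s r) + (linext lievec v :: lieop tree \<Rightarrow> 'k)"
    using linext_add finite_supp_inst ideal_fin[OF step.hyps(4)] by blast
  then show ?case using ideal_add[OF lie_inst[OF step.hyps(1-3), of a] step.IH] by metis
qed



lemma linext_fvec: "linext fvec v = (\<lambda>x. case x of Inl a \<Rightarrow> linext lievec v a | Inr b \<Rightarrow> (linext assvec v b :: 'k::field))"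
  by (auto simp: linext_def fvec_def fun_eq_iff split: sum.splits)

lemma linext_assvec: "linext assvec v b = (if isLC AssMul b then linext wd v (leaves b) else (0::'k::field))"
  by (auto simp: linext_def assvec_def)

lemma sum_rel_I: "u \<in> ideal lie_rels n \<Longrightarrow> w \<in> ideal ass_rels n \<Longrightarrow>
  (\<lambda>x. case x of Inl a \<Rightarrow> u a | Inr b \<Rightarrow> w b) \<in> (sum_rel n :: (lieop tree + assop tree \<Rightarrow> 'k::field) set)"
  unfolding sum_rel_def by blast

lemma zero_sum_rel: "0 \<in> (sum_rel n :: (lieop tree + assop tree \<Rightarrow> 'k::field) set)"
proof -
  have "(0 :: lieop tree + assop tree \<Rightarrow> 'k) = (\<lambda>x. case x of Inl a \<Rightarrow> (0::lieop tree \<Rightarrow> 'k) a | Inr b \<Rightarrow> (0:: assop tree \<Rightarrow> 'k) b)"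
    by (auto simp: fun_eq_iff split: sum.splits)
  then show ?thesis using sum_rel_I[OF ideal.zero ideal.zero] by metis
qed

lemma fvec_ideal: "v \<in> ideal arb_rels n \<Longrightarrow> linext fvec v \<in> (sum_rel n :: (lieop tree + assop tree \<Rightarrow> 'k::field) set)"
proof -
  assume v: "v \<in> ideal arb_rels n"
  have "linext fvec v = (\<lambda>x. case x of Inl a \<Rightarrow> linext lievec v a | Inr b \<Rightarrow> (0 :: assop tree \<Rightarrow> 'k) b)"
    unfolding linext_fvec linext_assvec wd_ideal[OF v] by (auto simp: fun_eq_iff split: sum.splits)
  then show ?thesis using sum_rel_I[OF lie_ideal[OF v] ideal.zero] by metis
qed

lemma multilin_leaves: "mset (leaves t) = mset (leaves t') \<Longrightarrow> multilin n t = multilin n t'"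
  by (simp add: multilin_def)

lemma fvec_vspace:
  assumes t: "t \<in> comp_basis n"
  shows "(fvec t :: _ \<Rightarrow> 'k::field) \<in> vspace (sum_basis n)"
proof -
  let ?W = "{w. set w \<subseteq> {0..<n} \<and> length w = n}"
  let ?B = "Inl ` {ren t} \<union> Inr ` (combo AssMul ` ?W)"
  have ml: "mset (leaves t) = mset [0..<n]" using t by (simp add: comp_basis_def multilin_def)
  have sub: "supp (fvec t :: _ \<Rightarrow> 'k) \<subseteq> ?B \<inter> sum_basis n"
  proof
    fix x assume x: "x \<in> supp (fvec t :: _ \<Rightarrow> 'k)"
    show "x \<in> ?B \<inter> sum_basis n"
    proof (cases x)
      case (Inl a)
      then have "pureBr t" "a = ren t" using x by (auto simp: fvec_def lievec_def single_def split: if_splits)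
      moreover have "multilin n (ren t)" using t by (simp add: comp_basis_def multilin_def)
      ultimately show ?thesis using Inl by (auto simp: sum_basis_def comp_basis_def)
    next
      case (Inr b)
      then have lc: "isLC AssMul b" and w: "(wd t (leaves b) :: 'k) \<noteq> 0" using x by (auto simp: fvec_def assvec_def split: if_splits)
      have m: "mset (leaves b) = mset [0..<n]" using wd_supp[OF w] ml by simp
      then have "set (leaves b) \<subseteq> {0..<n}" "length (leaves b) = n"
        by (metis atLeastLessThan_upt set_mset_mset order_refl, metis length_upt minus_nat.diff_0 size_mset)
      then have "b \<in> combo AssMul ` ?W" using isLC_combo[OF lc] by (metis (mono_tags, lifting) image_eqI mem_Collect_eq)
      then show ?thesis using Inr m by (auto simp: sum_basis_def comp_basis_def multilin_def)
    qed
  qed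
  have "finite ?W" using finite_lists_length_eq[of "{0..<n}" n] by simp
  then have "finite ?B" by simp
  then show ?thesis using sub unfolding vspace_def by (auto intro: finite_subset)
qed

section \<open>(e) equivariance\<close>

lemma act_Node[simp]: "act \<sigma> (Node g l r) = Node g (act \<sigma> l) (act \<sigma> r)" by (simp add: act_def)
lemma act_Leaf[simp]: "act \<sigma> (Leaf i) = Leaf (\<sigma> i)" by (simp add: act_def)

lemma act_comp: "act \<sigma> (act \<tau> t) = act (\<sigma> \<circ> \<tau>) t" by (induction t) auto
lemma act_id: "act id t = t" by (induction t) auto
lemma leaves_act: "leaves (act \<sigma> t) = map \<sigma> (leaves t)" by (induction t) auto
lemma isLeaf_act[simp]: "isLeaf (act \<sigma> t) = isLeaf t" by (cases t) auto
lemma isLC_act: "isLC g (act \<sigma> t) = isLC g t" by (induction t) auto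
lemma pureBr_act: "pureBr (act \<sigma> t) = pureBr t" by (induction t) auto
lemma ren_act: "ren (act \<sigma> t) = act \<sigma> (ren t)" by (induction t) (auto simp: ren_def)

lemma inj_act: "inj \<sigma> \<Longrightarrow> inj (act \<sigma>)"
  by (metis act_comp act_id inj_on_inverseI inv_o_cancel)

lemma iv_wd_act: "inj \<sigma> \<Longrightarrow> (\<lambda>w. (iv (act \<sigma> t) (map \<sigma> w) :: 'k::field)) = iv t \<and> (\<lambda>w. (wd (act \<sigma> t) (map \<sigma> w) :: 'k)) = wd t"
proof (induction t)
  case (Leaf i)
  have "map \<sigma> w = [\<sigma> i] \<longleftrightarrow> w = [i]" for w using Leaf inj_map_eq_map[of \<sigma> w "[i]"] by auto
  then show ?case by (auto simp: fun_eq_iff single_def)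
next
  case (Node g l r)
  then have IH: "(\<lambda>w. (iv (act \<sigma> l) (map \<sigma> w) :: 'k)) = iv l" "(\<lambda>w. (wd (act \<sigma> l) (map \<sigma> w) :: 'k)) = wd l"
      "(\<lambda>w. (iv (act \<sigma> r) (map \<sigma> w) :: 'k)) = iv r" by auto
  have lw: "(\<lambda>w. (lw (act \<sigma> l) (map \<sigma> w) :: 'k)) = lw l" using IH by (simp add: lw_def)
  show ?case
    by (cases g) (simp_all del: wd.simps(3) add: wd_St conv_map fun_eq_iff fun_diff_def IH lw)
qed

lemma linact_apply: "inj a \<Longrightarrow> finite (supp w) \<Longrightarrow> linext (\<lambda>t. single (a t) 1) w (a x) = (w x :: 'k::field)"
  unfolding linext_def single_def by (auto simp: inj_eq if_distrib cong: if_cong)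

lemma fvec_act: "inj \<sigma> \<Longrightarrow> (fvec (act \<sigma> t) (sum_act \<sigma> x) :: 'k::field) = fvec t x"
proof (cases x)
  case (Inl a)
  assume i: "inj \<sigma>"
  have ij: "inj (act \<sigma> :: lieop tree \<Rightarrow> _)" using inj_act[OF i] .
  show ?thesis using Inl ij
    by (auto simp: fvec_def sum_act_def lievec_def pureBr_act ren_act single_def inj_eq)
next
  case (Inr b)
  assume i: "inj \<sigma>"
  have "(wd (act \<sigma> t) (map \<sigma> (leaves b)) :: 'k) = wd t (leaves b)"
    using iv_wd_act[OF i, of t] by (metis)
  then show ?thesis using Inr
    by (auto simp: fvec_def sum_act_def assvec_def isLC_act leaves_act)
qed

lemma fvec_equiv:
  assumes t: "t \<in> comp_basis n" and p: "\<sigma> permutes {0..<n}"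
  shows "(fvec (act \<sigma> t) :: _ \<Rightarrow> 'k::field) = linact sum_act \<sigma> (fvec t)"
proof (rule ext)
  fix y
  have b: "bij \<sigma>" using permutes_bij[OF p] .
  then have i: "inj \<sigma>" by (rule bij_is_inj)
  define x where "x = sum_act (inv \<sigma>) y"
  have si: "\<sigma> \<circ> inv \<sigma> = id" using bij_is_surj[OF b] surj_iff by blast
  have y: "y = sum_act \<sigma> x" unfolding x_def sum_act_def
  proof -
    have "act \<sigma> \<circ> act (inv \<sigma>) = (id :: lieop tree \<Rightarrow> _)"
      by (rule ext) (simp add: act_comp si act_id)
    moreover have "act \<sigma> \<circ> act (inv \<sigma>) = (id :: assop tree \<Rightarrow> _)"
      by (rule ext) (simp add: act_comp si act_id)
    ultimately show "y = map_sum (act \<sigma>) (act \<sigma>) (map_sum (act (inv \<sigma>)) (act (inv \<sigma>)) y)"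
      by (simp add: sum.map_comp sum.map_id)
  qed
  have fin: "finite (supp (fvec t :: _ \<Rightarrow> 'k))" using fvec_vspace[OF t] unfolding vspace_def by blast
  have i1: "inj (act \<sigma> :: lieop tree \<Rightarrow> _)" using inj_act[OF i] .
  have i2: "inj (act \<sigma> :: assop tree \<Rightarrow> _)" using inj_act[OF i] .
  have ia: "inj (sum_act \<sigma>)" unfolding sum_act_def
  proof (rule injI)
    fix a b :: "lieop tree + assop tree"
    assume "map_sum (act \<sigma>) (act \<sigma>) a = map_sum (act \<sigma>) (act \<sigma>) b"
    then show "a = b" using i1 i2 by (cases a; cases b) (auto simp: inj_eq)
  qed
  show "(fvec (act \<sigma> t) y :: 'k) = linact sum_act \<sigma> (fvec t) y"
    unfolding y linact_def linact_apply[OF ia fin] fvec_act[OF i] ..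
qed



section \<open>Associative rewriting\<close>

fun mu :: "'o tree \<Rightarrow> nat" where
  "mu (Leaf i) = 0" | "mu (Node g l r) = mu l + mu r + length (leaves r)"

lemma leaves_plug_eq: "leaves u = leaves u' \<Longrightarrow> leaves (plug C h u) = leaves (plug C h u')"
  by (induction C) auto

lemma ass_step: "\<not> isLC AssMul b \<Longrightarrow> h \<notin> set (leaves b) \<Longrightarrow>
  \<exists>C x y z. h \<in> set (leaves C) \<and> b = plug C h (Node AssMul x (Node AssMul y z))
     \<and> mu (plug C h (Node AssMul (Node AssMul x y) z)) < mu b"
proof (induction b)
  case (Leaf i) then show ?case by simp
next
  case (Node g l r)
  have g: "g = AssMul" by (cases g) simp
  show ?case
  proof (cases r)
    case (Node g' y z)
    have g': "g' = AssMul" by (cases g') simp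
    have "length (leaves z) > 0" using leaves_ne[of z] by simp
    then show ?thesis using Node g g'
      by (intro exI[of _ "Leaf h"] exI[of _ l] exI[of _ y] exI[of _ z]) auto
  next
    case (Leaf j)
    then have nl: "\<not> isLC AssMul l" using Node.prems g by simp
    have "h \<notin> set (leaves l)" "h \<noteq> j" using Node.prems Leaf by auto
    from Node.IH(1)[OF nl this(1)] obtain C x y z where
      C: "h \<in> set (leaves C)" "l = plug C h (Node AssMul x (Node AssMul y z))"
         "mu (plug C h (Node AssMul (Node AssMul x y) z)) < mu l" by blast
    show ?thesis using C Leaf g \<open>h \<noteq> j\<close>
      by (intro exI[of _ "Node g C (Leaf j)"] exI[of _ x] exI[of _ y] exI[of _ z]) auto
  qed
qed

lemma multilin_less: "multilin n t \<Longrightarrow> i \<in> set (leaves t) \<Longrightarrow> i < n"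
  unfolding multilin_def by (metis atLeastLessThan_iff atLeastLessThan_upt set_mset_mset)

lemma ass_comb: "multilin n b \<Longrightarrow> single (combo AssMul (leaves b)) 1 - single b 1 \<in> (ideal ass_rels n :: (assop tree \<Rightarrow> 'k::field) set)"
proof (induction "mu b" arbitrary: b rule: less_induct)
  case less
  show ?case
  proof (cases "isLC AssMul b")
    case True
    then have "single (combo AssMul (leaves b)) 1 - single b 1 = (0 :: assop tree \<Rightarrow> 'k)"
      by (simp add: isLC_combo)
    then show ?thesis by (simp add: ideal.zero)
  next
    case False
    have hn: "n \<notin> set (leaves b)" using multilin_less[OF less.prems] by blast
    from ass_step[OF False hn] obtain C x y z where
      C: "n \<in> set (leaves C)" "b = plug C n (Node AssMul x (Node AssMul y z))"
         "mu (plug C n (Node AssMul (Node AssMul x y) z)) < mu b" by blast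
    define b' where "b' = plug C n (Node AssMul (Node AssMul x y) z)"
    have lb: "leaves b' = leaves b" unfolding b'_def C(2) by (rule leaves_plug_eq) simp
    have mb': "multilin n b'" using less.prems lb by (simp add: multilin_def)
    have IH: "single (combo AssMul (leaves b')) 1 - single b' 1 \<in> (ideal ass_rels n :: (assop tree \<Rightarrow> 'k) set)"
      using less.hyps[OF C(3)[folded b'_def] mb'] .
    define s where "s = (\<lambda>i::nat. if i = 0 then x else if i = 1 then y else z)"
    have I: "inst 1 C n s (hd ass_rels) \<in> (ideal ass_rels n :: (assop tree \<Rightarrow> 'k) set)"
      apply (rule ideal_single_inst)
      using C less.prems mb' by (auto simp: ass_rels_def s_def b'_def)
    have "inst 1 C n s (hd ass_rels) = single b' 1 - (single b 1 :: assop tree \<Rightarrow> 'k)"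
      by (auto simp: ass_rels_def s_def b'_def C(2) fun_eq_iff single_def)
    then have "(single (combo AssMul (leaves b)) 1 - single b 1 :: assop tree \<Rightarrow> 'k)
       = (single (combo AssMul (leaves b')) 1 - single b' 1) + inst 1 C n s (hd ass_rels)"
      using lb by (simp add: fun_eq_iff)
    then show ?thesis using ideal_add[OF IH I] by simp
  qed
qed



fun nbr :: "arbop tree \<Rightarrow> nat" where
  "nbr (Leaf i) = 0" | "nbr (Node g l r) = (if g = Br then 1 else 0) + nbr l + nbr r"

lemma nbr_plug: "nbr u' < nbr u \<Longrightarrow> (h \<in> set (leaves C) \<longrightarrow> nbr (plug C h u') < nbr (plug C h u)) \<and> nbr (plug C h u') \<le> nbr (plug C h u)"
  by (induction C) auto

lemma redex: "\<not> pureBr t \<Longrightarrow> \<not> isLC St t \<Longrightarrow> h \<notin> set (leaves t) \<Longrightarrow>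
  \<exists>C X Y Z. h \<in> set (leaves C) \<and>
   (t = plug C h (Node Br (Node St X Y) Z) \<or> t = plug C h (Node Br Z (Node St X Y)) \<or>
    t = plug C h (Node St (Node Br X Y) Z) \<or> t = plug C h (Node St X (Node St Y Z)) \<or>
    t = plug C h (Node St X (Node Br Y Z)))"
proof (induction t)
  case (Leaf i) then show ?case by simp
next
  case (Node g l r)
  show ?case
  proof (cases g)
    case St
    show ?thesis
    proof (cases r)
      case (Node g' Y Z)
      then show ?thesis using St
        by (cases g') (intro exI[of _ "Leaf h"] exI[of _ l] exI[of _ Y] exI[of _ Z]; simp)+
    next
      case (Leaf j)
      show ?thesis
      proof (cases l)
        case (Leaf i) then show ?thesis using Node.prems St \<open>r = Leaf j\<close> by simp
      next
        case (Node g'' X Y)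
        show ?thesis
        proof (cases g'')
          case Br then show ?thesis using St Node \<open>r = Leaf j\<close>
            by (intro exI[of _ "Leaf h"] exI[of _ X] exI[of _ Y] exI[of _ r]) simp
        next
          case St': St
          have a: "\<not> pureBr l" "\<not> isLC St l" "h \<notin> set (leaves l)" "h \<noteq> j"
            using Node.prems St St' Node \<open>r = Leaf j\<close> by auto
          from Node.IH(1)[OF a(1-3)] obtain C X Y Z where C: "h \<in> set (leaves C)"
            "l = plug C h (Node Br (Node St X Y) Z) \<or> l = plug C h (Node Br Z (Node St X Y)) \<or>
             l = plug C h (Node St (Node Br X Y) Z) \<or> l = plug C h (Node St X (Node St Y Z)) \<or>
             l = plug C h (Node St X (Node Br Y Z))" by blast
          show ?thesis using C St \<open>r = Leaf j\<close> a(4)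
            by (intro exI[of _ "Node g C r"] exI[of _ X] exI[of _ Y] exI[of _ Z]) auto
        qed
      qed
    qed
  next
    case Br
    show ?thesis
    proof (cases "\<exists>X Y. l = Node St X Y")
      case True
      then obtain X Y where "l = Node St X Y" by blast
      then show ?thesis using Br
        by (intro exI[of _ "Leaf h"] exI[of _ X] exI[of _ Y] exI[of _ r]) simp
    next
      case nl: False
      show ?thesis
      proof (cases "\<exists>X Y. r = Node St X Y")
        case True
        then obtain X Y where "r = Node St X Y" by blast
        then show ?thesis using Br
          by (intro exI[of _ "Leaf h"] exI[of _ X] exI[of _ Y] exI[of _ l]) simp
      next
        case nr: False
        show ?thesis
        proof (cases "pureBr l")
          case False
          then have nlc: "\<not> isLC St l" using nl by (cases l) auto
          have hl: "h \<notin> set (leaves l)" "h \<notin> set (leaves r)" using Node.prems by auto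
          from Node.IH(1)[OF False nlc hl(1)] obtain C X Y Z where C: "h \<in> set (leaves C)"
            "l = plug C h (Node Br (Node St X Y) Z) \<or> l = plug C h (Node Br Z (Node St X Y)) \<or>
             l = plug C h (Node St (Node Br X Y) Z) \<or> l = plug C h (Node St X (Node St Y Z)) \<or>
             l = plug C h (Node St X (Node Br Y Z))" by blast
          show ?thesis using C Br hl(2)
            by (intro exI[of _ "Node g C r"] exI[of _ X] exI[of _ Y] exI[of _ Z]) (auto simp: plug_notin)
        next
          case True
          then have False': "\<not> pureBr r" using Node.prems Br by simp
          then have nlc: "\<not> isLC St r" using nr by (cases r) auto
          have hl: "h \<notin> set (leaves l)" "h \<notin> set (leaves r)" using Node.prems by auto
          from Node.IH(2)[OF False' nlc hl(2)] obtain C X Y Z where C: "h \<in> set (leaves C)"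
            "r = plug C h (Node Br (Node St X Y) Z) \<or> r = plug C h (Node Br Z (Node St X Y)) \<or>
             r = plug C h (Node St (Node Br X Y) Z) \<or> r = plug C h (Node St X (Node St Y Z)) \<or>
             r = plug C h (Node St X (Node Br Y Z))" by blast
          show ?thesis using C Br hl(1)
            by (intro exI[of _ "Node g l C"] exI[of _ X] exI[of _ Y] exI[of _ Z]) (auto simp: plug_notin)
        qed
      qed
    qed
  qed
qed



definition nfA :: "arbop tree \<Rightarrow> arbop tree \<Rightarrow> 'k::field" where
  "nfA t = (\<lambda>t'. if isLC St t' then wd t (leaves t') else 0)"

lemma lw_LC: "isLC St t \<Longrightarrow> lw t = single (leaves t) 1"
proof (induction t)
  case (Leaf i) then show ?case by (simp add: lw_def)
next
  case (Node g l r)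
  then obtain j where "r = Leaf j" "g = St" by (cases r) auto
  then show ?case using Node by (simp add: lw_def conv_single_single del: wd.simps(3) add: wd_St)
qed

lemma nfA_LC: "isLC St t \<Longrightarrow> \<not> pureBr t \<Longrightarrow> (nfA t :: arbop tree \<Rightarrow> 'k::field) = single t 1"
proof -
  assume a: "isLC St t" "\<not> pureBr t"
  then have "\<not> isLeaf t" by (cases t) auto
  then have "(wd t :: nat list \<Rightarrow> 'k) = single (leaves t) 1" using lw_LC[OF a(1)] by (simp add: lw_def)
  then show ?thesis using a(1) by (auto simp: nfA_def fun_eq_iff single_def dest: isLC_eq)
qed

lemma kill: "(single t 1 :: arbop tree \<Rightarrow> 'k::field) \<in> ideal arb_rels n \<Longrightarrow> single t 1 - nfA t \<in> (ideal arb_rels n :: (arbop tree \<Rightarrow> 'k::field) set)"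
proof -
  assume a: "single t 1 \<in> (ideal arb_rels n :: (arbop tree \<Rightarrow> 'k) set)"
  have "linext wd (single t 1 :: arbop tree \<Rightarrow> 'k) = 0" using wd_ideal[OF a] .
  then have "(wd t :: nat list \<Rightarrow> 'k) = 0" by (simp add: linext_single fun_eq_iff)
  then have "(nfA t :: arbop tree \<Rightarrow> 'k) = 0" by (simp add: nfA_def fun_eq_iff)
  then show ?thesis using a by simp
qed

definition s3 :: "arbop tree \<Rightarrow> arbop tree \<Rightarrow> arbop tree \<Rightarrow> nat \<Rightarrow> arbop tree" where
  "s3 X Y Z = (\<lambda>i. if i = 0 then X else if i = 1 then Y else Z)"

lemma s3_simps[simp]: "s3 X Y Z 0 = X" "s3 X Y Z (Suc 0) = Y" "s3 X Y Z 2 = Z"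
  by (auto simp: s3_def)

lemma multilin_plug_mset: "multilin n (plug C h u) \<Longrightarrow> mset (leaves u') = mset (leaves u) \<Longrightarrow> multilin n (plug C h u')"
  using mset_leaves_plug[of u' u C h] by (simp add: multilin_def)

lemma rel_in: 
  "[(1, Node Br (L 0) (L 1)), (1, Node Br (L 1) (L 0))] \<in> set (arb_rels :: ('k::field, arbop) rel list)"
  "[(1, Node St (Node Br (L 0) (L 1)) (L 2))] \<in> set (arb_rels :: ('k::field, arbop) rel list)"
  "[(1, Node St (L 0) (Node St (L 1) (L 2)))] \<in> set (arb_rels :: ('k::field, arbop) rel list)"
  "[(1, Node Br (Node St (L 0) (L 1)) (L 2))] \<in> set (arb_rels :: ('k::field, arbop) rel list)"
  "[(1, Node St (L 0) (Node Br (L 1) (L 2))), (-1, Node St (Node St (L 0) (L 1)) (L 2)),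
      (1, Node St (Node St (L 0) (L 2)) (L 1))] \<in> set (arb_rels :: ('k::field, arbop) rel list)"
  by (simp_all add: arb_rels_def)

lemma single_inst1:
  fixes r :: "('k::field \<times> arbop tree) list"
  shows "r \<in> set arb_rels \<Longrightarrow> r = [(1, T)] \<Longrightarrow> h \<in> set (leaves C) \<Longrightarrow>
   multilin n (plug C h (subst s T)) \<Longrightarrow> single (plug C h (subst s T)) 1 \<in> (ideal arb_rels n :: (arbop tree \<Rightarrow> 'k) set)"
  using ideal_single_inst[where a = "1::'k" and r = r and rels = arb_rels] by simp

lemma NF: "multilin n t \<Longrightarrow> \<not> pureBr t \<Longrightarrow> single t 1 - nfA t \<in> (ideal arb_rels n :: (arbop tree \<Rightarrow> 'k::field) set)"
proof (induction "nbr t" arbitrary: t rule: less_induct)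
  case less
  show ?case
  proof (cases "isLC St t")
    case True
    then have "single t 1 - nfA t = (0 :: arbop tree \<Rightarrow> 'k)" by (simp add: nfA_LC[OF True less.prems(2)])
    then show ?thesis by (simp add: ideal.zero)
  next
    case False
    have hn: "n \<notin> set (leaves t)" using multilin_less[OF less.prems(1)] by blast
    from redex[OF less.prems(2) False hn] obtain C X Y Z where C: "n \<in> set (leaves C)" and
      D: "t = plug C n (Node Br (Node St X Y) Z) \<or> t = plug C n (Node Br Z (Node St X Y)) \<or>
    t = plug C n (Node St (Node Br X Y) Z) \<or> t = plug C n (Node St X (Node St Y Z)) \<or>
    t = plug C n (Node St X (Node Br Y Z))" by blast
    have ml: "multilin n t" by (rule less.prems(1))
    show ?thesis
    proof -
      { assume t: "t = plug C n (Node Br (Node St X Y) Z)"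
        have "single t 1 \<in> (ideal arb_rels n :: (arbop tree \<Rightarrow> 'k) set)"
          using single_inst1[OF rel_in(4) refl C, where s = "s3 X Y Z"] ml t by simp
        then have ?thesis by (rule kill) }
      moreover
      { assume t: "t = plug C n (Node Br Z (Node St X Y))"
        define t' where "t' = plug C n (Node Br (Node St X Y) Z)"
        have mt': "multilin n t'" unfolding t'_def using ml t by (rule_tac multilin_plug_mset) (auto simp: ac_simps)
        have 1: "single t' 1 \<in> (ideal arb_rels n :: (arbop tree \<Rightarrow> 'k) set)"
          using single_inst1[OF rel_in(4) refl C, where s = "s3 X Y Z"] mt' t'_def by simp
        have 2: "inst 1 C n (s3 Z (Node St X Y) Z) [(1, Node Br (L 0) (L 1)), (1, Node Br (L 1) (L 0))]
              \<in> (ideal arb_rels n :: (arbop tree \<Rightarrow> 'k) set)"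
          using ideal_single_inst[OF rel_in(1) C, where s = "s3 Z (Node St X Y) Z" and a = "1::'k"] ml mt' t t'_def by simp
        have "single t 1 = inst 1 C n (s3 Z (Node St X Y) Z) [(1, Node Br (L 0) (L 1)), (1, Node Br (L 1) (L 0))]
              - (single t' 1 :: arbop tree \<Rightarrow> 'k)"
          by (simp add: t t'_def fun_eq_iff)
        then have "single t 1 \<in> (ideal arb_rels n :: (arbop tree \<Rightarrow> 'k) set)"
          using ideal_diff[OF 2 1] by simp
        then have ?thesis by (rule kill) }
      moreover
      { assume t: "t = plug C n (Node St (Node Br X Y) Z)"
        have "single t 1 \<in> (ideal arb_rels n :: (arbop tree \<Rightarrow> 'k) set)"
          using single_inst1[OF rel_in(2) refl C, where s = "s3 X Y Z"] ml t by simp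
        then have ?thesis by (rule kill) }
      moreover
      { assume t: "t = plug C n (Node St X (Node St Y Z))"
        have "single t 1 \<in> (ideal arb_rels n :: (arbop tree \<Rightarrow> 'k) set)"
          using single_inst1[OF rel_in(3) refl C, where s = "s3 X Y Z"] ml t by simp
        then have ?thesis by (rule kill) }
      moreover
      { assume t: "t = plug C n (Node St X (Node Br Y Z))"
        define t1 where "t1 = plug C n (Node St (Node St X Y) Z)"
        define t2 where "t2 = plug C n (Node St (Node St X Z) Y)"
        have m1: "multilin n t1" unfolding t1_def using ml t by (rule_tac multilin_plug_mset) (auto simp: ac_simps)
        have m2: "multilin n t2" unfolding t2_def using ml t by (rule_tac multilin_plug_mset) (auto simp: ac_simps)
        let ?r = "[(1, Node St (L 0) (Node Br (L 1) (L 2))), (-1, Node St (Node St (L 0) (L 1)) (L 2)),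
                  (1, Node St (Node St (L 0) (L 2)) (L 1))]"
        have I: "inst 1 C n (s3 X Y Z) ?r \<in> (ideal arb_rels n :: (arbop tree \<Rightarrow> 'k) set)"
          using ideal_single_inst[OF rel_in(5) C, where s = "s3 X Y Z" and a = "1::'k"] ml m1 m2 t t1_def t2_def by simp
        have Ie: "inst 1 C n (s3 X Y Z) ?r = single t 1 - single t1 1 + (single t2 1 :: arbop tree \<Rightarrow> 'k)"
          by (simp add: t t1_def t2_def fun_eq_iff single_def)
        have "(\<lambda>y. \<Sum>(c,t)\<leftarrow>?r. 1*c * (wd (plug C n (subst (s3 X Y Z) t)) y :: 'k)) = 0"
          using wd_ideal[OF I] unfolding linext_inst .
        then have "(wd t :: nat list \<Rightarrow> 'k) = wd t1 - wd t2"
          by (simp add: linext_inst t t1_def t2_def fun_eq_iff algebra_simps)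
        then have nfe: "(nfA t :: arbop tree \<Rightarrow> 'k) = nfA t1 - nfA t2" by (simp add: nfA_def fun_eq_iff)
        have np: "\<not> pureBr t1" "\<not> pureBr t2" unfolding t1_def t2_def by (simp_all add: pureBr_plug[OF C])
        have lt: "nbr t1 < nbr t" "nbr t2 < nbr t" unfolding t t1_def t2_def using nbr_plug C by auto
        have IH1: "single t1 1 - nfA t1 \<in> (ideal arb_rels n :: (arbop tree \<Rightarrow> 'k) set)"
          using less.hyps[OF lt(1) m1 np(1)] .
        have IH2: "single t2 1 - nfA t2 \<in> (ideal arb_rels n :: (arbop tree \<Rightarrow> 'k) set)"
          using less.hyps[OF lt(2) m2 np(2)] .
        have "single t 1 - (nfA t :: arbop tree \<Rightarrow> 'k) =
              inst 1 C n (s3 X Y Z) ?r + (single t1 1 - nfA t1) - (single t2 1 - nfA t2)"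
          unfolding Ie nfe by (simp add: algebra_simps)
        then have ?thesis using ideal_diff[OF ideal_add[OF I IH1] IH2] by simp }
      ultimately show ?thesis using D by blast
    qed
  qed
qed



lemma sum_fun_apply: "(\<Sum>x\<in>A. g x) y = (\<Sum>x\<in>A. g x y)"
  by (induction A rule: infinite_finite_induct) auto

lemma ass_fun: "w \<in> ideal ass_rels n \<Longrightarrow> linext (\<lambda>b. single (leaves b) 1) w = (0 :: nat list \<Rightarrow> 'k::field)"
proof (induction rule: ideal.induct)
  case zero then show ?case by (rule linext_zero)
next
  case (step r h C s v a)
  have r: "r = [(1, Node AssMul (Node AssMul (L 0) (L 1)) (L 2)), (-1, Node AssMul (L 0) (Node AssMul (L 1) (L 2)))]"
    using step.hyps(1) by (simp add: ass_rels_def)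
  have le: "leaves (plug C h (Node AssMul (Node AssMul (s 0) (s 1)) (s 2))) = leaves (plug C h (Node AssMul (s 0) (Node AssMul (s 1) (s 2))))"
    by (rule leaves_plug_eq) simp
  have "linext (\<lambda>b. single (leaves b) 1) (inst a C h s r) = (0 :: nat list \<Rightarrow> 'k)"
    unfolding linext_inst r using le by (simp add: fun_eq_iff)
  moreover have "linext (\<lambda>b. single (leaves b) 1) (inst a C h s r + v) = linext (\<lambda>b. single (leaves b) 1) (inst a C h s r) + (linext (\<lambda>b. single (leaves b) 1) v :: nat list \<Rightarrow> 'k)"
    using linext_add finite_supp_inst ideal_fin[OF step.hyps(4)] by blast
  ultimately show ?case using step.IH by (metis add.right_neutral)
qed

definition unrnv :: "(lieop tree \<Rightarrow> 'k::field) \<Rightarrow> arbop tree \<Rightarrow> 'k" where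
  "unrnv u t = (if pureBr t then u (ren t) else 0)"

lemma unrnv_single: "unrnv (single x c) = single (unrn x) c"
  by (auto simp: unrnv_def single_def fun_eq_iff unrn_ren)

lemma unrnv_add: "unrnv (u + u') = unrnv u + unrnv u'"
  by (auto simp: unrnv_def fun_eq_iff)

lemma unrnv_zero: "unrnv 0 = (0 :: arbop tree \<Rightarrow> 'k::field)"
  by (rule ext) (simp add: unrnv_def)

lemma unrnv_zero': "unrnv (\<lambda>a. 0) = (\<lambda>a::arbop tree. 0 :: 'k::field)"
  by (rule ext) (simp add: unrnv_def)

lemma unrn_ps: "unrn (plug C h (subst s t)) = plug (unrn C) h (subst (\<lambda>i. unrn (s i)) (unrn t))"
  unfolding unrn_def by (simp add: map_tree_plug map_tree_subst)

lemma unrnv_inst: "unrnv (inst a C h s rl) = inst a (unrn C) h (\<lambda>i. unrn (s i)) (lift rl)"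
  by (induction rl) (auto simp: lift_def unrnv_add unrnv_single unrnv_zero unrnv_zero' unrn_ps)

lemma lift_in: "rl \<in> set lie_rels \<Longrightarrow> lift rl \<in> set arb_rels"
  unfolding lie_rels_def arb_rels_def lift_def unrn_def by auto

lemma unrn_ideal: "u \<in> ideal lie_rels n \<Longrightarrow> unrnv u \<in> (ideal arb_rels n :: (arbop tree \<Rightarrow> 'k::field) set)"
proof (induction rule: ideal.induct)
  case zero then show ?case by (simp only: unrnv_zero) (rule ideal.zero)
next
  case (step r h C s v a)
  have "inst a (unrn C) h (\<lambda>i. unrn (s i)) (lift r) \<in> (ideal arb_rels n :: (arbop tree \<Rightarrow> 'k) set)"
  proof (rule ideal_single_inst[OF lift_in[OF step.hyps(1)]])
    show "h \<in> set (leaves (unrn C))" using step.hyps(2) by simp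
    show "\<forall>(c, t)\<in>set (lift r). multilin n (plug (unrn C) h (subst (\<lambda>i. unrn (s i)) t))"
    proof clarify
      fix c t assume "(c, t) \<in> set (lift r)"
      then obtain t' where t': "(c, t') \<in> set r" "t = unrn t'" by (auto simp: lift_def)
      then have "multilin n (plug C h (subst s t'))" using step.hyps(3) by auto
      then show "multilin n (plug (unrn C) h (subst (\<lambda>i. unrn (s i)) t))"
        using unrn_ps[of C h s t'] t'(2) leaves_unrn by (metis multilin_def)
    qed
  qed
  moreover have "unrnv (inst a C h s r + v) = inst a (unrn C) h (\<lambda>i. unrn (s i)) (lift r) + unrnv v"
    by (simp only: unrnv_add unrnv_inst)
  ultimately show ?case using ideal_add[OF _ step.IH] by metis
qed

lemma inj_mod:
  assumes v: "v \<in> vspace (comp_basis n)" and S: "linext fvec v \<in> (sum_rel n :: (lieop tree + assop tree \<Rightarrow> 'k::field) set)"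
  shows "v \<in> ideal arb_rels n"
proof -
  from S obtain u w where uw: "linext fvec v = (\<lambda>x. case x of Inl a \<Rightarrow> u a | Inr b \<Rightarrow> w b)"
    "u \<in> ideal lie_rels n" "w \<in> (ideal ass_rels n :: (assop tree \<Rightarrow> 'k) set)"
    unfolding sum_rel_def by blast
  have u: "linext lievec v = u" using fun_cong[OF uw(1), of "Inl _"] by (simp add: linext_fvec fun_eq_iff)
  have w: "\<And>b. w b = (if isLC AssMul b then linext wd v (leaves b) else 0)"
    using fun_cong[OF uw(1), of "Inr _"] by (simp add: linext_fvec linext_assvec)
  define A where "A = supp v"
  have finA: "finite A" using v by (simp add: vspace_def A_def)
  have W: "linext wd v = (0 :: nat list \<Rightarrow> 'k)"
  proof (rule ext)
    fix x
    show "linext wd v x = (0 :: nat list \<Rightarrow> 'k) x"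
    proof (cases "x = []")
      case True
      have "\<And>t. (wd t [] :: 'k) = 0" using wd_supp by fastforce
      then show ?thesis using True by (simp add: linext_def)
    next
      case False
      have fw: "finite (supp w)" using ideal_fin[OF uw(3)] by blast
      have "linext (\<lambda>b. single (leaves b) 1) w x = (0 :: 'k)" using ass_fun[OF uw(3)] by (simp add: fun_eq_iff)
      moreover have "linext (\<lambda>b. single (leaves b) 1) w x = (\<Sum>b\<in>supp w. if b = combo AssMul x then w b else (0::'k))"
        unfolding linext_def
      proof (rule sum.cong[OF refl])
        fix b assume "b \<in> supp w"
        then have "isLC AssMul b" using w by (auto split: if_splits)
        then have "(x = leaves b) = (b = combo AssMul x)" using isLC_combo combo_props[OF False] by metis
        then show "w b * single (leaves b) 1 x = (if b = combo AssMul x then w b else 0)"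
          by (auto simp: single_def)
      qed
      moreover have "\<dots> = w (combo AssMul x)" using fw by (auto simp: sum.delta)
      moreover have "w (combo AssMul x) = linext wd v x"
      proof -
        have "isLC AssMul (combo AssMul x)" "leaves (combo AssMul x) = x" using combo_props[OF False, of AssMul] by auto
        then show ?thesis using w by simp
      qed
      ultimately show ?thesis by simp
    qed
  qed
  define vL where "vL = (\<lambda>t. if pureBr t then v t else 0)"
  define vS where "vS = (\<lambda>t. if pureBr t then 0 else v t)"
  have vsplit: "v = vL + vS" by (auto simp: vL_def vS_def fun_eq_iff)
  have "vL = unrnv (linext lievec v)"
  proof (rule ext)
    fix t
    show "vL t = unrnv (linext lievec v) t"
    proof (cases "pureBr t")
      case True
      have "linext lievec v (ren t) = (\<Sum>t'\<in>A. if t' = t then v t' else (0::'k))"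
        unfolding linext_def A_def
      proof (rule sum.cong[OF refl])
        fix t' show "v t' * lievec t' (ren t) = (if t' = t then v t' else 0)"
          using True unrn_ren by (auto simp: lievec_def single_def) metis
      qed
      also have "\<dots> = v t" using finA by (auto simp: sum.delta A_def)
      finally show ?thesis using True by (simp add: vL_def unrnv_def)
    qed (simp add: vL_def unrnv_def)
  qed
  then have L: "vL \<in> ideal arb_rels n" using unrn_ideal[OF uw(2)] u by simp
  define A' where "A' = {t\<in>A. \<not> pureBr t}"
  have finA': "finite A'" using finA by (simp add: A'_def)
  have mlA': "\<And>t. t \<in> A' \<Longrightarrow> multilin n t \<and> \<not> pureBr t"
    using v by (auto simp: A'_def A_def vspace_def comp_basis_def)
  have SI: "(\<Sum>t\<in>A'. (\<lambda>y. v t * (single t 1 - nfA t) y)) \<in> (ideal arb_rels n :: (arbop tree \<Rightarrow> 'k) set)"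
    using mlA' by (intro ideal_sum[OF finA'] ideal_scale NF) auto
  have "(\<Sum>t\<in>A'. (\<lambda>y. v t * (single t 1 - nfA t) y)) = vS"
  proof (rule ext)
    fix y
    have sd: "\<And>t. v t * single t 1 y = (if t = y then v t else 0)" by (simp add: single_def)
    have e1: "(\<Sum>t\<in>A'. v t * single t 1 y) = vS y"
      unfolding sd using finA' by (auto simp: vS_def A'_def A_def sum.delta)
    have e2: "(\<Sum>t\<in>A'. v t * (nfA t y :: 'k)) = 0"
    proof (cases "isLC St y")
      case True
      have "(\<Sum>t\<in>A'. v t * (nfA t y :: 'k)) = (\<Sum>t\<in>A. v t * wd t (leaves y))"
        unfolding A'_def nfA_def using True finA
        by (intro sum.mono_neutral_cong_left) (auto simp: wd_pure)
      also have "\<dots> = linext wd v (leaves y)" by (simp add: linext_def A_def)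
      finally show ?thesis using W by simp
    qed (simp add: nfA_def)
    show "(\<Sum>t\<in>A'. (\<lambda>y. v t * (single t 1 - nfA t) y)) y = vS y"
      unfolding sum_fun_apply using e1 e2 by (simp add: right_diff_distrib sum_subtractf)
  qed
  then have "vS \<in> ideal arb_rels n" using SI by simp
  then show ?thesis using vsplit ideal_add[OF L] by simp
qed



lemma sum_rel_add: "a \<in> sum_rel n \<Longrightarrow> b \<in> sum_rel n \<Longrightarrow> a + b \<in> (sum_rel n :: (lieop tree + assop tree \<Rightarrow> 'k::field) set)"
proof -
  assume "a \<in> sum_rel n" "b \<in> sum_rel n"
  then obtain u1 w1 u2 w2 where a: "a = (\<lambda>x. case x of Inl a \<Rightarrow> u1 a | Inr b \<Rightarrow> w1 b)" "u1 \<in> ideal lie_rels n" "w1 \<in> ideal ass_rels n"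
    and b: "b = (\<lambda>x. case x of Inl a \<Rightarrow> u2 a | Inr b \<Rightarrow> w2 b)" "u2 \<in> ideal lie_rels n" "w2 \<in> ideal ass_rels n"
    unfolding sum_rel_def by blast
  have "a + b = (\<lambda>x. case x of Inl a \<Rightarrow> (u1 + u2) a | Inr b \<Rightarrow> (w1 + w2) b)"
    unfolding a b by (auto simp: fun_eq_iff split: sum.splits)
  then show ?thesis using sum_rel_I[OF ideal_add[OF a(2) b(2)] ideal_add[OF a(3) b(3)]] by metis
qed

lemma sum_rel_scale: "a \<in> sum_rel n \<Longrightarrow> (\<lambda>y. c * a y) \<in> (sum_rel n :: (lieop tree + assop tree \<Rightarrow> 'k::field) set)"
proof -
  assume "a \<in> sum_rel n"
  then obtain u1 w1 where a: "a = (\<lambda>x. case x of Inl a \<Rightarrow> u1 a | Inr b \<Rightarrow> w1 b)" "u1 \<in> ideal lie_rels n" "w1 \<in> ideal ass_rels n"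
    unfolding sum_rel_def by blast
  have "(\<lambda>y. c * a y) = (\<lambda>x. case x of Inl a \<Rightarrow> (\<lambda>y. c * u1 y) a | Inr b \<Rightarrow> (\<lambda>y. c * w1 y) b)"
    unfolding a by (auto simp: fun_eq_iff split: sum.splits)
  then show ?thesis using sum_rel_I[OF ideal_scale[OF a(2)] ideal_scale[OF a(3)]] by metis
qed

lemma vspace_add: "u \<in> vspace P \<Longrightarrow> v \<in> vspace P \<Longrightarrow> u + v \<in> vspace P"
proof -
  assume "u \<in> vspace P" "v \<in> vspace P"
  then have fu: "finite (supp u)" "supp u \<subseteq> P" "finite (supp v)" "supp v \<subseteq> P" by (auto simp: vspace_def)
  have s: "supp (u + v) \<subseteq> supp u \<union> supp v" by auto
  have "finite (supp (u + v))" using finite_subset[OF s] fu by auto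
  then show ?thesis unfolding vspace_def using fu s by auto
qed

lemma vspace_scale: "v \<in> vspace P \<Longrightarrow> (\<lambda>y. c * v y) \<in> vspace P"
  unfolding vspace_def by (auto intro: finite_subset[of _ "supp v"])

lemma vspace_single: "t \<in> P \<Longrightarrow> single t c \<in> vspace P"
  unfolding vspace_def using finite_supp_single[of t c] by (auto simp: single_def)

lemma vspace_zero: "(0 :: 'a \<Rightarrow> 'k::field) \<in> vspace P"
  unfolding vspace_def by simp

lemma surj_comb:
  fixes f :: "'a \<Rightarrow> 'b \<Rightarrow> 'k::field"
  assumes B: "\<forall>e\<in>Q. \<exists>v\<in>vspace P. linext f v - single e 1 \<in> S"
    and S0: "0 \<in> S" and Sadd: "\<And>a b. a \<in> S \<Longrightarrow> b \<in> S \<Longrightarrow> a + b \<in> S"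
    and Ssc: "\<And>c a. a \<in> S \<Longrightarrow> (\<lambda>y. c * a y) \<in> S"
  shows "w \<in> vspace Q \<Longrightarrow> \<exists>v\<in>vspace P. linext f v - w \<in> S"
proof -
  have "finite A \<Longrightarrow> \<forall>w. supp w \<subseteq> A \<longrightarrow> supp w \<subseteq> Q \<longrightarrow> (\<exists>v\<in>vspace P. linext f v - w \<in> S)" for A
  proof (induction A rule: finite_induct)
    case empty
    show ?case
    proof clarify
      fix w :: "'b \<Rightarrow> 'k" assume "supp w \<subseteq> {}"
      then have "w = 0" by (auto simp: fun_eq_iff)
      then have "linext f 0 - w = 0" by simp
      then show "\<exists>v\<in>vspace P. linext f v - w \<in> S" using S0 vspace_zero by metis
    qed
  next
    case (insert e A)
    show ?case
    proof clarify
      fix w :: "'b \<Rightarrow> 'k" assume w: "supp w \<subseteq> insert e A" "supp w \<subseteq> Q"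
      define w' where "w' = w(e := 0)"
      have "supp w' \<subseteq> A" "supp w' \<subseteq> Q" using w by (auto simp: w'_def)
      then obtain v' where v': "v' \<in> vspace P" "linext f v' - w' \<in> S" using insert.IH by blast
      show "\<exists>v\<in>vspace P. linext f v - w \<in> S"
      proof (cases "w e = 0")
        case True
        then have "w' = w" by (auto simp: w'_def)
        then show ?thesis using v' by blast
      next
        case False
        then have "e \<in> Q" using w by auto
        then obtain ve where ve: "ve \<in> vspace P" "linext f ve - single e 1 \<in> S" using B by blast
        define v where "v = v' + (\<lambda>x. w e * ve x)"
        have vP: "v \<in> vspace P" unfolding v_def by (rule vspace_add[OF v'(1) vspace_scale[OF ve(1)]])
        have fin: "finite (supp v')" "finite (supp (\<lambda>x. w e * ve x))"
          using v'(1) vspace_scale[OF ve(1)] by (auto simp: vspace_def)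
        have "linext f v = linext f v' + (\<lambda>y. w e * linext f ve y)"
          unfolding v_def linext_add[OF fin] linext_scale ..
        then have "linext f v - w = (linext f v' - w') + (\<lambda>y. w e * (linext f ve - single e 1) y)"
          by (auto simp: fun_eq_iff w'_def single_def right_diff_distrib)
        then show ?thesis using vP Sadd[OF v'(2) Ssc[OF ve(2)]] by metis
      qed
    qed
  qed
  moreover assume "w \<in> vspace Q"
  ultimately show ?thesis unfolding vspace_def by blast
qed

lemma fvec_unrn: "(fvec (unrn a) :: _ \<Rightarrow> 'k::field) = single (Inl a) 1"
  by (auto simp: fun_eq_iff fvec_def lievec_def assvec_def wd_pure single_def split: sum.splits)

lemma lc_nonpure: "isLC St t \<Longrightarrow> length (leaves t) \<ge> 2 \<Longrightarrow> \<not> pureBr t"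
  by (cases t) auto

lemma fvec_combo:
  assumes "length w \<ge> 2"
  shows "(fvec (combo St w) :: _ \<Rightarrow> 'k::field) = single (Inr (combo AssMul w)) 1"
proof -
  have ne: "w \<noteq> []" using assms by auto
  have c: "leaves (combo St w) = w" "isLC St (combo St w)" using combo_props[OF ne, of St] by auto
  have np: "\<not> pureBr (combo St w)" using lc_nonpure c assms by simp
  have nl: "\<not> isLeaf (combo St w)" using np by (cases "combo St w") auto
  have wd: "(wd (combo St w) :: nat list \<Rightarrow> 'k) = single w 1"
    using lw_LC[OF c(2)] nl c by (simp add: lw_def)
  have ca: "leaves (combo AssMul w) = w" "isLC AssMul (combo AssMul w)" using combo_props[OF ne, of AssMul] by auto
  show ?thesis
  proof (rule ext)
    fix x show "(fvec (combo St w) x :: 'k) = single (Inr (combo AssMul w)) 1 x"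
    proof (cases x)
      case (Inl a) then show ?thesis using np by (simp add: fvec_def lievec_def single_def)
    next
      case (Inr b)
      have "(isLC AssMul b \<and> leaves b = w) = (b = combo AssMul w)"
        using ca isLC_combo by metis
      then show ?thesis using Inr by (auto simp: fvec_def assvec_def wd single_def)
    qed
  qed
qed

lemma basis_pre:
  assumes n: "n \<ge> 2" and e: "e \<in> sum_basis n"
  shows "\<exists>v\<in>vspace (comp_basis n). linext fvec v - single e 1 \<in> (sum_rel n :: (lieop tree + assop tree \<Rightarrow> 'k::field) set)"
proof (cases e)
  case (Inl a)
  then have a: "multilin n a" using e by (auto simp: sum_basis_def comp_basis_def)
  have "unrn a \<in> comp_basis n" using a by (simp add: comp_basis_def multilin_def)
  moreover have "linext fvec (single (unrn a) 1) - single e 1 = (0 :: _ \<Rightarrow> 'k)"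
    by (simp add: linext_single fvec_unrn Inl fun_eq_iff)
  ultimately show ?thesis using vspace_single zero_sum_rel by metis
next
  case (Inr b)
  then have b: "multilin n b" using e by (auto simp: sum_basis_def comp_basis_def)
  have len: "length (leaves b) = n" using b unfolding multilin_def by (metis length_upt minus_nat.diff_0 size_mset)
  then have len2: "length (leaves b) \<ge> 2" using n by simp
  have ne: "leaves b \<noteq> []" using len2 by auto
  have "combo St (leaves b) \<in> comp_basis n" using b combo_props[OF ne, of St] by (simp add: comp_basis_def multilin_def)
  moreover have "linext fvec (single (combo St (leaves b)) 1) - single e 1
     = (\<lambda>x. case x of Inl a \<Rightarrow> (0 :: lieop tree \<Rightarrow> 'k) a | Inr b' \<Rightarrow> (single (combo AssMul (leaves b)) 1 - single b 1) b')"
    unfolding linext_single fvec_combo[OF len2] by (auto simp: Inr fun_eq_iff single_def split: sum.splits)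
  moreover have "\<dots> \<in> sum_rel n" using sum_rel_I[OF ideal.zero ass_comb[OF b]] .
  ultimately show ?thesis using vspace_single by metis
qed



lemma len_subst: "length (leaves (subst s t)) \<ge> length (leaves t)"
proof (induction t)
  case (Leaf i) then show ?case using leaves_ne[of "s i"] by (cases "leaves (s i)") auto
qed auto

lemma len_plug: "h \<in> set (leaves C) \<Longrightarrow> length (leaves (plug C h u)) \<ge> length (leaves u)"
  by (induction C) auto

lemma multilin1_len: "multilin 1 t \<Longrightarrow> length (leaves t) = 1"
  unfolding multilin_def by (metis length_upt minus_nat.diff_0 size_mset)

lemma ideal_one:
  assumes R: "\<forall>r\<in>set rels. \<forall>x\<in>set r. 2 \<le> length (leaves (snd x))"
  shows "v \<in> ideal rels 1 \<Longrightarrow> v = 0"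
proof (induction rule: ideal.induct)
  case zero then show ?case by simp
next
  case (step r h C s v a)
  show ?case
  proof (cases r)
    case Nil then show ?thesis using step.IH by simp
  next
    case (Cons x r')
    obtain c t where x: "x = (c,t)" by fastforce
    have "multilin 1 (plug C h (subst s t))" using step.hyps(3) Cons x by auto
    then have "length (leaves (plug C h (subst s t))) = 1" by (rule multilin1_len)
    moreover have "2 \<le> length (leaves t)" using R step.hyps(1) Cons x by fastforce
    ultimately show ?thesis using len_plug[OF step.hyps(2), of "subst s t"] len_subst[of t s] by simp
  qed
qed

lemma comp_basis_1: "comp_basis 1 = {Leaf 0}"
proof -
  have "multilin 1 t \<longleftrightarrow> t = Leaf 0" for t :: "'o tree"
  proof
    assume m: "multilin 1 t"
    then have l: "length (leaves t) = 1" by (rule multilin1_len)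
    obtain i where "t = Leaf i"
    proof (cases t)
      case (Node g l r)
      then have "length (leaves t) \<ge> 2" using leaves_ne[of l] leaves_ne[of r]
        by (cases "leaves l"; cases "leaves r") auto
      with l show ?thesis by simp
    qed
    then show "t = Leaf 0" using m by (simp add: multilin_def)
  qed (simp add: multilin_def)
  then show ?thesis by (auto simp: comp_basis_def)
qed

lemma arb_len: "\<forall>r\<in>set (arb_rels :: ('k::field, arbop) rel list). \<forall>x\<in>set r. 2 \<le> length (leaves (snd x))"
  by (simp add: arb_rels_def)
lemma ass_len: "\<forall>r\<in>set (ass_rels :: ('k::field, assop) rel list). \<forall>x\<in>set r. 2 \<le> length (leaves (snd x))"
  by (simp add: ass_rels_def)

lemma part1: "quot_iso (comp_basis 1) (ideal arb_rels 1 :: (arbop tree \<Rightarrow> 'k::field) set) act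
                  (comp_basis 1) (ideal ass_rels 1 :: (assop tree \<Rightarrow> 'k) set) act 1"
  unfolding quot_iso_def comp_basis_1
proof (intro exI[of _ "\<lambda>t. single (Leaf 0) (1::'k)"] conjI ballI allI impI)
  fix t :: "arbop tree" assume "t \<in> {Leaf 0}"
  show "single (Leaf 0) (1::'k) \<in> vspace {Leaf 0}" by (rule vspace_single) simp
next
  fix v :: "arbop tree \<Rightarrow> 'k" assume "v \<in> ideal arb_rels 1"
  then have "v = 0" using ideal_one[OF arb_len] by blast
  then show "linext (\<lambda>t. single (Leaf 0) 1) v \<in> (ideal ass_rels 1 :: (assop tree \<Rightarrow> 'k) set)"
    by (simp only: linext_zero) (rule ideal.zero)
next
  fix v :: "arbop tree \<Rightarrow> 'k" assume v: "v \<in> vspace {Leaf 0}"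
    and I: "linext (\<lambda>t. single (Leaf 0) 1) v \<in> (ideal ass_rels 1 :: (assop tree \<Rightarrow> 'k) set)"
  have sv: "supp v \<subseteq> {Leaf 0}" using v by (simp add: vspace_def)
  have e1: "linext (\<lambda>t. single (Leaf 0) 1) v = (\<lambda>y. \<Sum>t\<in>{Leaf 0}. v t * (single (Leaf 0) 1 y :: 'k))"
    by (rule linext_eq[OF _ sv]) simp
  have e2: "linext (\<lambda>t. single (Leaf 0) 1) v = (0 :: assop tree \<Rightarrow> 'k)" using ideal_one[OF ass_len I] .
  have "(\<lambda>y. \<Sum>t\<in>{Leaf 0}. v t * (single (Leaf 0) 1 y :: 'k)) = (0 :: assop tree \<Rightarrow> 'k)"
    unfolding e1[symmetric] by (rule e2)
  from fun_cong[OF this, of "Leaf 0"] have "v (Leaf 0) = 0" by (simp add: single_def)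
  then have "v = 0" using sv by (auto simp: fun_eq_iff)
  then show "v \<in> ideal arb_rels 1" by (simp add: ideal.zero)
next
  fix w :: "assop tree \<Rightarrow> 'k" assume w: "w \<in> vspace {Leaf 0}"
  have sw: "supp w \<subseteq> {Leaf 0}" using w by (simp add: vspace_def)
  let ?v = "single (Leaf 0) (w (Leaf 0)) :: arbop tree \<Rightarrow> 'k"
  have "linext (\<lambda>t. single (Leaf 0) 1) ?v - w = 0"
    unfolding linext_single using sw by (auto simp: fun_eq_iff single_def)
  note eq = this
  show "\<exists>v\<in>vspace {Leaf 0 :: arbop tree}. linext (\<lambda>t. single (Leaf 0) 1) v - w \<in> (ideal ass_rels 1 :: (assop tree \<Rightarrow> 'k) set)"
  proof (rule bexI[where x = ?v])
    show "linext (\<lambda>t. single (Leaf 0) 1) ?v - w \<in> (ideal ass_rels 1 :: (assop tree \<Rightarrow> 'k) set)"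
      unfolding eq by (rule ideal.zero)
    show "?v \<in> vspace {Leaf 0}" by (rule vspace_single) simp
  qed
next
  fix \<sigma> :: "nat \<Rightarrow> nat" and t :: "arbop tree"
  assume p: "\<sigma> permutes {0..<1}" and t: "t \<in> {Leaf 0}"
  have "\<sigma> 0 \<in> {0..<1}" using permutes_in_image[OF p, of 0] by simp
  then have s0: "\<sigma> 0 = 0" by simp
  have "single (Leaf 0) 1 - linact act \<sigma> (single (Leaf 0) 1) = (0 :: assop tree \<Rightarrow> 'k)"
    by (simp add: linact_def linext_single s0 fun_eq_iff)
  then show "single (Leaf 0) 1 - linact act \<sigma> (single (Leaf 0) 1) \<in> (ideal ass_rels 1 :: (assop tree \<Rightarrow> 'k) set)"
    by (simp add: ideal.zero)
qed

lemma part2: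
  assumes n: "n \<ge> 2"
  shows "quot_iso (comp_basis n) (ideal arb_rels n :: (arbop tree \<Rightarrow> 'k::field) set) act
                          (sum_basis n) (sum_rel n :: (lieop tree + assop tree \<Rightarrow> 'k) set) sum_act n"
  unfolding quot_iso_def
proof (intro exI[of _ "fvec :: arbop tree \<Rightarrow> _ \<Rightarrow> 'k"] conjI ballI allI impI)
  fix t :: "arbop tree" assume "t \<in> comp_basis n"
  then show "(fvec t :: _ \<Rightarrow> 'k) \<in> vspace (sum_basis n)" by (rule fvec_vspace)
next
  fix v assume "v \<in> (ideal arb_rels n :: (arbop tree \<Rightarrow> 'k) set)"
  then show "linext fvec v \<in> (sum_rel n :: (lieop tree + assop tree \<Rightarrow> 'k) set)" by (rule fvec_ideal)
next
  fix v :: "arbop tree \<Rightarrow> 'k" assume "v \<in> vspace (comp_basis n)" "linext fvec v \<in> sum_rel n"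
  then show "v \<in> ideal arb_rels n" by (rule inj_mod)
next
  fix w :: "lieop tree + assop tree \<Rightarrow> 'k" assume w: "w \<in> vspace (sum_basis n)"
  have B: "\<forall>e\<in>sum_basis n. \<exists>v\<in>vspace (comp_basis n). linext fvec v - single e 1 \<in> (sum_rel n :: (lieop tree + assop tree \<Rightarrow> 'k) set)"
    using basis_pre[OF n] by blast
  show "\<exists>v\<in>vspace (comp_basis n). linext fvec v - w \<in> sum_rel n"
    by (rule surj_comb[OF B zero_sum_rel sum_rel_add sum_rel_scale w])
next
  fix \<sigma> and t :: "arbop tree" assume p: "\<sigma> permutes {0..<n}" and t: "t \<in> comp_basis n"
  show "(fvec (act \<sigma> t) :: _ \<Rightarrow> 'k) - linact sum_act \<sigma> (fvec t) \<in> sum_rel n"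
  proof -
    have eq: "(fvec (act \<sigma> t) :: lieop tree + assop tree \<Rightarrow> 'k) - linact sum_act \<sigma> (fvec t) = 0"
      unfolding fvec_equiv[OF t p] by (rule diff_self)
    show ?thesis unfolding eq by (rule zero_sum_rel)
  qed
qed


theorem mainTheorem20:
  shows "quot_iso (comp_basis 1) (ideal arb_rels 1 :: (arbop tree \<Rightarrow> 'k::field_char_0) set) act
                  (comp_basis 1) (ideal ass_rels 1 :: (assop tree \<Rightarrow> 'k) set) act 1
       \<and> (\<forall>n\<ge>2. quot_iso (comp_basis n) (ideal arb_rels n :: (arbop tree \<Rightarrow> 'k) set) act
                          (sum_basis n) (sum_rel n :: (lieop tree + assop tree \<Rightarrow> 'k) set) sum_act n)"
  using part1 part2 by blast

end
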